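(* Consider the closed-loop system $\Sigma$ described in the context, with Assumptions (A1)–(A4) holding, and with $\eta(s):=\frac{1}{\sqrt m}\rho_1^{-1}\!\big(r\frac{\sigma}{2}\alpha_3(s)\big)$. Suppose $$r\in\left[0,\ \frac{\alpha_3(\alpha_2^{-1}(\epsilon))}{\alpha_3(\alpha_1^{-1}(\bar\epsilon))}\right).$$ Then (i) the inter-event times $t_{k+1}-t_k$, $k\in\mathbb{N}=\{1,2,\dots\}$, are uniformly lower bounded by a positive constant that depends on the initial state; and (ii) the trajectories of $\Sigma$ are globally uniformly ultimately bounded, with ultimate bound $\alpha_1^{-1}(\epsilon)$ on $\|x(t)\|$.
   Context: Plant: $\dot x(t)=f(x(t),u(t),d(t))$ for $t\ge t_0=0$, with $x\in\mathbb{R}^n$, $u\in\mathbb{R}^m$, $d\in\mathbb{R}^q$. Standing assumptions: (A1) there exist $\gamma:\mathbb{R}^n\to\mathbb{R}^m$, a continuously differentiable $V:\mathbb{R}^n\to\mathbb{R}$ and class $\mathcal{K}_\infty$ functions $\alpha_1,\alpha_2,\alpha_3,\rho_1,\rho_2$ with $\alpha_1(\|x\|)\le V(x)\le\alpha_2(\|x\|)$ and $\frac{\partial V}{\partial x}f(x,\gamma(x)+e,d)\le-\alpha_3(\|x\|)+\rho_1(\|e\|)+\rho_2(\|d\|)$ for all $x\in\mathbb{R}^n,e\in\mathbb{R}^m,d\in\mathbb{R}^q$; (A2) $f$ and $\gamma$ are Lipschitz on compact sets, $f(0)=0$, $\gamma(0)=0$; (A3) there is $D\ge0$ with $\|d(t)\|\le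 D$ for all $t\ge0$; (A4) $\Phi=\{\phi_j:[0,\infty)\to\mathbb{R}\}_{j=0}^p$ consists of continuously differentiable functions, $\phi_0$ is a nonzero constant, and for a fixed $T>0$ the functions in $\Phi$ are linearly independent on $[0,T]$. Write $\phi(\tau)=[\phi_0(\tau),\dots,\phi_p(\tau)]^\top$ and $g(a,\tau)=a^\top\phi(\tau)$ for $a\in\mathbb{R}^{p+1}$. Control law: for event times $t_0<t_1<\dots$, $u(t_k+\tau)=a(k)^\top\phi(\tau)$ for $\tau\in[0,t_{k+1}-t_k)$, where $a(k)\in\mathbb{R}^{(p+1)\times m}$ has $i$-th column $a_i(k)$. Model: $\hat x$ solves $\dot{\hat x}=f(\hat x,\gamma(\hat x),0)$ on $[t_k,t_k+T]$ with $\hat x(t_k)=x(t_k)$, and $\hat u_i(\tau):=\gamma_i(\hat x(t_k+\tau))$ ($i$-th component). Coefficients: for each $i\in\{1,\dots,m\}$, $a_i(k)$ is the (unique) minimizer over $a\in\mathbb{R}^{p+1}$ of $\int_0^T|g(a,\tau)-\hat u_i(\tau)|^2d\tau$ subject to $|g(a,0)-\hat u_i(0)|\le\eta(\|\hat x(t_k)\|)$, with $\eta(s):=\frac{1}{\sqrt m}\rho_1^{-1}(r\frac{\sigma}{2}\alpha_3(s))$. Event-triggering rule: with $e(t):=u(t)-\gamma(x(t))$, a design parameter $\sigma\in(0,1)$ and $\epsilon:=\alpha_2\big(\alpha_3^{-1}(2\rho_2(D)/\sigma)\big)\ge0$, $t_{k+1}=\min\{t>t_k:\ \rho_1(\|e(t)\|)\ge\frac{\sigma}{2}\alpha_3(\|x(t)\|)\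 \text{and}\ V(x(t))\ge\epsilon\}$. The closed-loop system $\Sigma$ is the combination of plant, control law, coefficient optimization and triggering rule. Notation: $\epsilon_k:=V(x(t_k))$ for $k\in\mathbb{N}_0$, and $\bar\epsilon:=\max\{\epsilon,\epsilon_0\}$. *)

theory Defs
  imports "HOL-Analysis.Analysis"
begin

definition class_K :: "(real \<Rightarrow> real) \<Rightarrow> bool" where
  "class_K \<alpha> \<longleftrightarrow> continuous_on {0..} \<alpha> \<and> \<alpha> 0 = 0 \<and> strict_mono_on {0..} \<alpha>"

definition class_Kinf :: "(real \<Rightarrow> real) \<Rightarrow> bool" where
  "class_Kinf \<alpha> \<longleftrightarrow> class_K \<alpha> \<and> filterlim \<alpha> at_top at_top"

definition Kinv :: "(real \<Rightarrow> real) \<Rightarrow> real \<Rightarrow> real" where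
  "Kinv \<alpha> = the_inv_into {0..} \<alpha>"

definition gfun :: "nat \<Rightarrow> (nat \<Rightarrow> real \<Rightarrow> real) \<Rightarrow> (nat \<Rightarrow> real) \<Rightarrow> real \<Rightarrow> real" where
  "gfun p \<phi> c \<tau> = (\<Sum>j\<le>p. c j * \<phi> j \<tau>)"

definition trig_eps :: "(real \<Rightarrow> real) \<Rightarrow> (real \<Rightarrow> real) \<Rightarrow> (real \<Rightarrow> real) \<Rightarrow> real \<Rightarrow> real \<Rightarrow> real" where
  "trig_eps \<alpha>2 \<alpha>3 \<rho>2 D \<sigma> = \<alpha>2 (Kinv \<alpha>3 (2 * \<rho>2 D / \<sigma>))"

definition r_bound :: "(real \<Rightarrow> real) \<Rightarrow> (real \<Rightarrow> real) \<Rightarrow> (real \<Rightarrow> real) \<Rightarrow> real \<Rightarrow> real \<Rightarrow> real" where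
  "r_bound \<alpha>1 \<alpha>2 \<alpha>3 eps eps0 = \<alpha>3 (Kinv \<alpha>2 eps) / \<alpha>3 (Kinv \<alpha>1 (max eps eps0))"

text \<open>A (Caratheodory) solution of the closed-loop system Sigma.
  d: disturbance, x: state, u: applied input, te: event times (extended reals;
  te k = infinity means fewer than k+1 events occur), a k i: coefficient vector
  a_i(k), xh k: model trajectory x-hat on [t_k, t_k+T], shifted to [0,T].\<close>
definition closed_loop_solution ::
  "(real^'n \<Rightarrow> real^'m \<Rightarrow> real^'q \<Rightarrow> real^'n) \<Rightarrow> (real^'n \<Rightarrow> real^'m) \<Rightarrow> (real^'n \<Rightarrow> real)
   \<Rightarrow> (real \<Rightarrow> real) \<Rightarrow> (real \<Rightarrow> real) \<Rightarrow> (real \<Rightarrow> real) \<Rightarrow> (real \<Rightarrow> real) \<Rightarrow> real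
   \<Rightarrow> nat \<Rightarrow> (nat \<Rightarrow> real \<Rightarrow> real) \<Rightarrow> real \<Rightarrow> real \<Rightarrow> real
   \<Rightarrow> (real \<Rightarrow> real^'q) \<Rightarrow> (real \<Rightarrow> real^'n) \<Rightarrow> (real \<Rightarrow> real^'m) \<Rightarrow> (nat \<Rightarrow> ereal)
   \<Rightarrow> (nat \<Rightarrow> 'm \<Rightarrow> nat \<Rightarrow> real) \<Rightarrow> (nat \<Rightarrow> real \<Rightarrow> real^'n) \<Rightarrow> bool" where
  "closed_loop_solution f \<gamma> V \<alpha>2 \<alpha>3 \<rho>1 \<rho>2 D p \<phi> T \<sigma> r d x u te a xh \<longleftrightarrow>
    (let eps = trig_eps \<alpha>2 \<alpha>3 \<rho>2 D \<sigma>;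
         Tmax = (SUP k. te k);
         \<eta> = (\<lambda>s. 1 / sqrt (real CARD('m)) * Kinv \<rho>1 (r * (\<sigma> / 2) * \<alpha>3 s))
     in
      (\<forall>t\<ge>0. norm (d t) \<le> D)
    \<and> te 0 = 0
    \<and> (\<forall>k. te k < \<infinity> \<longrightarrow> te k < te (Suc k))
    \<and> (\<forall>k. te k = \<infinity> \<longrightarrow> te (Suc k) = \<infinity>)
    \<and> (\<forall>k t. te k \<le> ereal t \<and> ereal t < te (Suc k) \<longrightarrow>
          u t = (\<chi> i. gfun p \<phi> (a k i) (t - real_of_ereal (te k))))
    \<and> (\<forall>t. 0 \<le> t \<and> ereal t < Tmax \<longrightarrow>
          (\<lambda>s. f (x s) (u s) (d s)) absolutely_integrable_on {0..t}
        \<and> x t = x 0 + integral {0..t} (\<lambda>s. f (x s) (u s) (d s)))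
    \<and> (\<forall>k. te k < \<infinity> \<longrightarrow>
        (let tk = real_of_ereal (te k);
             uk = (\<lambda>t. (\<chi> i. gfun p \<phi> (a k i) (t - tk)) :: real^'m);
             trig = (\<lambda>t. \<rho>1 (norm (uk t - \<gamma> (x t))) \<ge> \<sigma> / 2 * \<alpha>3 (norm (x t))
                          \<and> V (x t) \<ge> eps)
         in
           xh k 0 = x tk
         \<and> (\<forall>\<tau>\<in>{0..T}. (xh k has_vector_derivative f (xh k \<tau>) (\<gamma> (xh k \<tau>)) 0) (at \<tau> within {0..T}))
         \<and> (\<forall>i. (let uh = (\<lambda>\<tau>. \<gamma> (xh k \<tau>) $ i);
                    J = (\<lambda>c. integral {0..T} (\<lambda>\<tau>. (gfun p \<phi> c \<tau> - uh \<tau>)\<^sup>2));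
                    feas = (\<lambda>c. \<bar>gfun p \<phi> c 0 - uh 0\<bar> \<le> \<eta> (norm (xh k 0)))
                in feas (a k i) \<and> (\<forall>c. feas c \<longrightarrow> J (a k i) \<le> J c)))
         \<and> (\<forall>t. tk < t \<and> ereal t < te (Suc k) \<longrightarrow> \<not> trig t)
         \<and> (te (Suc k) < \<infinity> \<longrightarrow> trig (real_of_ereal (te (Suc k)))))))"

end

theory Submission
  imports Defs
begin

lemma K_mono:
  assumes "class_Kinf \<alpha>" "0 \<le> s" "0 \<le> t"
  shows "\<alpha> s \<le> \<alpha> t \<longleftrightarrow> s \<le> t" "\<alpha> s < \<alpha> t \<longleftrightarrow> s < t"
proof -
  have sm: "strict_mono_on {0..} \<alpha>" using assms(1) by (simp add: class_Kinf_def class_K_def)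
  have lt: "\<alpha> a < \<alpha> b" if "0 \<le> a" "a < b" for a b
    using sm that by (auto intro: strict_mono_onD)
  show "\<alpha> s < \<alpha> t \<longleftrightarrow> s < t"
    using lt[of s t] lt[of t s] assms(2,3) by (metis less_asym linorder_neqE)
  then show "\<alpha> s \<le> \<alpha> t \<longleftrightarrow> s \<le> t"
    using lt[of s t] lt[of t s] assms(2,3) by (metis less_asym linorder_neqE order.order_iff_strict)
qed

lemma K_0: "class_Kinf \<alpha> \<Longrightarrow> \<alpha> 0 = 0" by (simp add: class_Kinf_def class_K_def)

lemma K_nonneg: "class_Kinf \<alpha> \<Longrightarrow> 0 \<le> s \<Longrightarrow> 0 \<le> \<alpha> s"
  using K_mono[of \<alpha> 0 s] K_0[of \<alpha>] by simp

lemma K_pos: "class_Kinf \<alpha> \<Longrightarrow> 0 < s \<Longrightarrow> 0 < \<alpha> s"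
  using K_mono[of \<alpha> 0 s] K_0[of \<alpha>] by simp

lemma K_cont: "class_Kinf \<alpha> \<Longrightarrow> continuous_on {0..} \<alpha>"
  by (simp add: class_Kinf_def class_K_def)

lemma K_surj:
  assumes "class_Kinf \<alpha>" "0 \<le> y"
  shows "\<exists>s\<ge>0. \<alpha> s = y"
proof -
  have "filterlim \<alpha> at_top at_top" using assms(1) by (simp add: class_Kinf_def)
  then have "eventually (\<lambda>x. \<alpha> x \<ge> y) at_top" by (simp add: filterlim_at_top)
  then obtain S where S: "\<And>x. x \<ge> S \<Longrightarrow> \<alpha> x \<ge> y" by (auto simp: eventually_at_top_linorder)
  define S' where "S' = max S 0"
  have "\<alpha> S' \<ge> y" using S by (simp add: S'_def)
  moreover have "\<alpha> 0 \<le> y" using K_0[OF assms(1)] assms(2) by simp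
  moreover have "continuous_on {0..S'} \<alpha>"
    using K_cont[OF assms(1)] by (rule continuous_on_subset) auto
  ultimately obtain s where "s \<in> {0..S'}" "\<alpha> s = y"
    using IVT'[of \<alpha> 0 y S'] by (auto simp: S'_def)
  then show ?thesis by auto
qed

lemma K_inj: "class_Kinf \<alpha> \<Longrightarrow> inj_on \<alpha> {0..}"
proof (rule inj_onI)
  fix s t assume "class_Kinf \<alpha>" "s \<in> {0..}" "t \<in> {0..}" "\<alpha> s = \<alpha> t"
  then show "s = t" using K_mono(1)[of \<alpha> s t] K_mono(1)[of \<alpha> t s] by auto
qed

lemma Kinv_right:
  assumes "class_Kinf \<alpha>" "0 \<le> y"
  shows "\<alpha> (Kinv \<alpha> y) = y" "0 \<le> Kinv \<alpha> y"
proof -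
  obtain s where s: "s \<ge> 0" "\<alpha> s = y" using K_surj[OF assms] by blast
  have "y \<in> \<alpha> ` {0..}" using s by auto
  then show "\<alpha> (Kinv \<alpha> y) = y" "0 \<le> Kinv \<alpha> y"
    using f_the_inv_into_f[OF K_inj[OF assms(1)]] the_inv_into_into[OF K_inj[OF assms(1)], of y "{0..}"]
    by (auto simp: Kinv_def)
qed

lemma Kinv_left:
  assumes "class_Kinf \<alpha>" "0 \<le> s"
  shows "Kinv \<alpha> (\<alpha> s) = s"
  using the_inv_into_f_f[OF K_inj[OF assms(1)]] assms(2) by (simp add: Kinv_def)

lemma Kinv_mono:
  assumes "class_Kinf \<alpha>" "0 \<le> y" "0 \<le> z"
  shows "Kinv \<alpha> y \<le> Kinv \<alpha> z \<longleftrightarrow> y \<le> z" "Kinv \<alpha> y < Kinv \<alpha> z \<longleftrightarrow> y < z"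
  using K_mono[OF assms(1) Kinv_right(2)[OF assms(1,2)] Kinv_right(2)[OF assms(1,3)]]
    Kinv_right(1)[OF assms(1,2)] Kinv_right(1)[OF assms(1,3)] by auto

lemma Kinv_0: "class_Kinf \<alpha> \<Longrightarrow> Kinv \<alpha> 0 = 0"
  using Kinv_left[of \<alpha> 0] K_0[of \<alpha>] by simp

lemma K_le_Kinv: "class_Kinf \<alpha> \<Longrightarrow> 0 \<le> s \<Longrightarrow> 0 \<le> y \<Longrightarrow> \<alpha> s \<le> y \<longleftrightarrow> s \<le> Kinv \<alpha> y"
  by (metis K_mono(1) Kinv_right)

lemma K_ge_Kinv: "class_Kinf \<alpha> \<Longrightarrow> 0 \<le> s \<Longrightarrow> 0 \<le> y \<Longrightarrow> y \<le> \<alpha> s \<longleftrightarrow> Kinv \<alpha> y \<le> s"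
  by (metis K_mono(1) Kinv_right)

lemma gfun_sq:
  "(gfun p \<phi> c \<tau>)^2 = (\<Sum>j\<le>p. \<Sum>l\<le>p. c j * c l * (\<phi> j \<tau> * \<phi> l \<tau>))"
  unfolding gfun_def power2_eq_square sum_product by (simp add: algebra_simps)

lemma gram:
  fixes \<phi> :: "nat \<Rightarrow> real \<Rightarrow> real"
  assumes cont: "\<And>j. j \<le> p \<Longrightarrow> continuous_on {0..T} (\<phi> j)"
    and T: "T > 0"
    and indep: "\<And>c. (\<forall>\<tau>\<in>{0..T}. gfun p \<phi> c \<tau> = 0) \<Longrightarrow> \<forall>j\<le>p. c j = 0"
  shows "\<exists>m>0. \<forall>c. m * (\<Sum>j\<le>p. (c j)^2) \<le> integral {0..T} (\<lambda>\<tau>. (gfun p \<phi> c \<tau>)^2)"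
proof -
  define G where "G j l = integral {0..T} (\<lambda>\<tau>. \<phi> j \<tau> * \<phi> l \<tau>)" for j l
  define Q where "Q c = (\<Sum>j\<le>p. \<Sum>l\<le>p. c j * c l * G j l)" for c :: "nat \<Rightarrow> real"
  have intjl: "(\<lambda>\<tau>. \<phi> j \<tau> * \<phi> l \<tau>) integrable_on {0..T}" if "j \<le> p" "l \<le> p" for j l
    using cont that by (intro integrable_continuous_interval continuous_intros) auto
  have intjl': "(\<lambda>\<tau>. a * (\<phi> j \<tau> * \<phi> l \<tau>)) integrable_on {0..T}" if "j \<le> p" "l \<le> p" for j l a
    using integrable_on_cmult_left[OF intjl[OF that]] by simp
  have Qeq: "integral {0..T} (\<lambda>\<tau>. (gfun p \<phi> c \<tau>)^2) = Q c" for c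
  proof -
    have "integral {0..T} (\<lambda>\<tau>. (gfun p \<phi> c \<tau>)^2)
        = integral {0..T} (\<lambda>\<tau>. \<Sum>j\<le>p. \<Sum>l\<le>p. c j * c l * (\<phi> j \<tau> * \<phi> l \<tau>))"
      by (simp add: gfun_sq)
    also have "\<dots> = (\<Sum>j\<le>p. integral {0..T} (\<lambda>\<tau>. \<Sum>l\<le>p. c j * c l * (\<phi> j \<tau> * \<phi> l \<tau>)))"
      by (rule integral_sum) (auto intro!: integrable_sum intjl')
    also have "\<dots> = Q c"
      unfolding Q_def G_def
      by (intro sum.cong refl, subst integral_sum) (auto intro!: intjl')
    finally show ?thesis .
  qed
  have gcont: "continuous_on {0..T} (gfun p \<phi> c)" for c
    unfolding gfun_def by (intro continuous_intros cont) auto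
  have gint: "(\<lambda>\<tau>. (gfun p \<phi> c \<tau>)^2) integrable_on {0..T}" for c
    by (intro integrable_continuous_interval continuous_intros gcont)
  have Qnn: "0 \<le> Q c" for c
    unfolding Qeq[symmetric] by (rule integral_nonneg) (auto intro!: integrable_continuous_interval continuous_intros cont simp: gfun_def)
  have Qcont: "continuous_on UNIV Q"
    unfolding Q_def by (intro continuous_intros continuous_on_product_coordinates)
  define B where "B j = (if j \<le> p then {-1..1::real} else {0})" for j
  define S where "S = Pi UNIV B \<inter> {c. (\<Sum>j\<le>p. (c j)^2) = 1}"
  have cPi: "compact (Pi UNIV B)"
  proof -
    have "compactin (product_topology (\<lambda>i. euclidean) UNIV) (PiE UNIV B)"
      by (subst compactin_PiE) (auto simp: B_def)
    then show ?thesis by (simp add: euclidean_product_topology PiE_UNIV_domain)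
  qed
  have cS: "compact S"
    unfolding S_def
    by (intro compact_Int_closed cPi closed_Collect_eq continuous_intros continuous_on_product_coordinates)
  have neS: "(\<lambda>j. if j = 0 then 1 else 0) \<in> S"
  proof -
    have "(\<Sum>j\<le>p. (if j = 0 then 1 else 0::real)^2) = (\<Sum>j\<le>p. if j = 0 then 1 else 0)"
      by (intro sum.cong) auto
    also have "\<dots> = 1" by simp
    finally show ?thesis by (auto simp: S_def B_def)
  qed
  obtain c0 where c0: "c0 \<in> S" "\<And>c. c \<in> S \<Longrightarrow> Q c0 \<le> Q c"
    using continuous_attains_inf[OF cS _ continuous_on_subset[OF Qcont]] neS by blast
  have Qpos: "Q c0 > 0"
  proof (rule ccontr)
    assume "\<not> Q c0 > 0"
    then have Q0: "Q c0 = 0" using Qnn[of c0] by simp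
    have "gfun p \<phi> c0 \<tau> = 0" if "\<tau> \<in> {0..T}" for \<tau>
    proof -
      have "((\<lambda>\<tau>. (gfun p \<phi> c0 \<tau>)^2) has_integral 0) (cbox 0 T)"
        using Q0 Qeq[of c0] integrable_integral[OF gint[of c0]] by simp
      then have "(gfun p \<phi> c0 \<tau>)^2 = 0"
        using T that
        by (intro has_integral_0_cbox_imp_0[of 0 T "\<lambda>\<tau>. (gfun p \<phi> c0 \<tau>)^2"])
           (auto intro!: continuous_intros gcont)
      then show ?thesis by simp
    qed
    then have "\<forall>j\<le>p. c0 j = 0" using indep by blast
    then have "(\<Sum>j\<le>p. (c0 j)^2) = 0" by simp
    then show False using c0(1) by (simp add: S_def)
  qed
  show ?thesis
  proof (intro exI[of _ "Q c0"] conjI allI Qpos)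
    fix c :: "nat \<Rightarrow> real"
    define s where "s = (\<Sum>j\<le>p. (c j)^2)"
    have s0: "s \<ge> 0" unfolding s_def by (intro sum_nonneg) auto
    show "Q c0 * (\<Sum>j\<le>p. (c j)^2) \<le> integral {0..T} (\<lambda>\<tau>. (gfun p \<phi> c \<tau>)^2)"
    proof (cases "s = 0")
      case True
      then show ?thesis using Qnn[of c] by (simp add: Qeq s_def)
    next
      case False
      then have spos: "s > 0" using s0 by simp
      define c' where "c' j = (if j \<le> p then c j / sqrt s else 0)" for j
      have le: "(c j)^2 \<le> s" if "j \<le> p" for j
        unfolding s_def using that by (intro member_le_sum) auto
      have "c' \<in> Pi UNIV B"
      proof
        fix j assume "j \<in> (UNIV::nat set)"
        show "c' j \<in> B j"
        proof (cases "j \<le> p")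
          case True
          have "\<bar>c j\<bar>^2 \<le> s" using le[OF True] by simp
          then have "\<bar>c j\<bar> \<le> sqrt s" by (rule real_le_rsqrt)
          moreover have sq: "sqrt s > 0" using spos by simp
          ultimately have "\<bar>c j\<bar> / sqrt s \<le> 1" by (subst divide_le_eq_1_pos[OF sq])
          then have "\<bar>c j / sqrt s\<bar> \<le> 1" by (simp only: abs_divide abs_of_pos[OF sq])
          then have "-1 \<le> c j / sqrt s \<and> c j / sqrt s \<le> 1" using abs_le_D1 abs_le_D2 by fastforce
          then show ?thesis using True by (simp add: c'_def B_def)
        qed (simp add: c'_def B_def)
      qed
      moreover have "(\<Sum>j\<le>p. (c' j)^2) = 1"
        using spos by (simp add: c'_def power_divide sum_divide_distrib[symmetric] s_def)
      ultimately have "c' \<in> S" by (simp add: S_def)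
      then have "Q c0 \<le> Q c'" by (rule c0(2))
      also have "Q c' = Q c / s"
      proof -
        have *: "c' j * c' l * G j l = c j * c l * G j l / s" if "j \<le> p" "l \<le> p" for j l
          using that spos by (simp add: c'_def field_simps real_sqrt_mult[symmetric])
        show ?thesis unfolding Q_def sum_divide_distrib by (auto intro!: sum.cong simp: *)
      qed
      finally show ?thesis using spos by (simp add: Qeq s_def[symmetric] field_simps)
    qed
  qed
qed

lemma integral_diff_interval:
  fixes G :: "real \<Rightarrow> 'a::banach"
  assumes "G integrable_on {a..b}" "a \<le> s" "s \<le> t" "t \<le> b"
  shows "integral {a..t} G - integral {a..s} G = integral {s..t} G"
proof -
  have "G integrable_on {a..t}" using assms by (intro integrable_subinterval_real[OF assms(1)]) auto
  then have "integral {a..s} G + integral {s..t} G = integral {a..t} G"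
    using Henstock_Kurzweil_Integration.integral_combine[of a s t G] assms \<open>G integrable_on {a..t}\<close> by simp
  then show ?thesis by (simp add: algebra_simps)
qed

lemma integral_bound_const:
  fixes G :: "real \<Rightarrow> 'a::euclidean_space"
  assumes "G integrable_on {s..t}" "s \<le> t" "\<And>r. r \<in> {s..t} \<Longrightarrow> norm (G r) \<le> M"
  shows "norm (integral {s..t} G) \<le> M * (t - s)"
proof -
  have "norm (integral {s..t} G) \<le> integral {s..t} (\<lambda>_. M)"
    using assms by (intro integral_norm_bound_integral) auto
  then show ?thesis using assms(2) by (simp add: mult.commute)
qed

lemma chain_rule_int:
  fixes X G gradV :: "real \<Rightarrow> 'a::euclidean_space" and V :: "'a \<Rightarrow> real"
  assumes ab: "a \<le> b"
   and Xeq: "\<And>t. t \<in> {a..b} \<Longrightarrow> X t = X a + integral {a..t} G"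
   and Gi: "G absolutely_integrable_on {a..b}"
   and GM: "\<And>t. t \<in> {a..b} \<Longrightarrow> norm (G t) \<le> M"
   and Vd: "\<And>z. (V has_derivative (\<lambda>h. gradV' z \<bullet> h)) (at z)"
   and gc: "continuous_on UNIV gradV'"
  shows "(\<lambda>s. gradV' (X s) \<bullet> G s) absolutely_integrable_on {a..b}"
    and "V (X b) - V (X a) = integral {a..b} (\<lambda>s. gradV' (X s) \<bullet> G s)"
proof -
  have Gint: "G integrable_on {a..b}" using Gi by (rule absolutely_integrable_on_def[THEN iffD1, THEN conjunct1])
  have M0: "0 \<le> M" using GM[of a] ab by (meson atLeastAtMost_iff norm_ge_zero order_trans order_refl)
  have Xdiff: "X t - X s = integral {s..t} G" if "a \<le> s" "s \<le> t" "t \<le> b" for s t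
    using Xeq[of t] Xeq[of s] integral_diff_interval[OF Gint that] that by auto
  have Xlip: "norm (X t - X s) \<le> M * (t - s)" if "a \<le> s" "s \<le> t" "t \<le> b" for s t
    unfolding Xdiff[OF that]
    by (rule integral_bound_const) (use that GM in \<open>auto intro: integrable_subinterval_real[OF Gint]\<close>)
  have Xcont: "continuous_on {a..b} X"
  proof (unfold continuous_on_iff, intro ballI allI impI)
    fix t e :: real assume t': "t \<in> {a..b}" and e: "0 < e"
    have t: "a \<le> t" "t \<le> b" using t' by auto
    show "\<exists>d>0. \<forall>t'\<in>{a..b}. dist t' t < d \<longrightarrow> dist (X t') (X t) < e"
    proof (intro exI[of _ "e / (M + 1)"] conjI ballI impI)
      show "0 < e / (M + 1)" using e M0 by simp
      fix t' assume t'0: "t' \<in> {a..b}" "dist t' t < e / (M + 1)"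
      then have t': "t' \<in> {a..b}" "\<bar>t' - t\<bar> < e / (M + 1)" by (auto simp: dist_real_def)
      have "dist (X t') (X t) \<le> M * \<bar>t' - t\<bar>"
        using Xlip[of t t'] Xlip[of t' t] t t' by (cases "t \<le> t'") (auto simp: dist_norm norm_minus_commute)
      also have "\<dots> \<le> (M + 1) * \<bar>t' - t\<bar>" by (simp add: mult_right_mono)
      also have "\<dots> < e" using t'(2) M0 by (simp add: field_simps)
      finally show "dist (X t') (X t) < e" .
    qed
  qed
  have gXc: "continuous_on {a..b} (\<lambda>s. gradV' (X s))"
    using continuous_on_compose2[OF gc Xcont] by auto
  show wi: "(\<lambda>s. gradV' (X s) \<bullet> G s) absolutely_integrable_on {a..b}"
  proof (rule absolutely_integrable_bounded_measurable_product[where h = "(\<bullet>)"])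
    show "bilinear ((\<bullet>) :: 'a \<Rightarrow> 'a \<Rightarrow> real)"
      by (simp add: bilinear_conv_bounded_bilinear bounded_bilinear_inner)
    show "(\<lambda>s. gradV' (X s)) \<in> borel_measurable (lebesgue_on {a..b})"
      by (rule continuous_imp_measurable_on_sets_lebesgue[OF gXc]) auto
    show "{a..b} \<in> sets lebesgue" by auto
    show "bounded ((\<lambda>s. gradV' (X s)) ` {a..b})"
      by (rule compact_imp_bounded, rule compact_continuous_image[OF gXc]) auto
    show "G absolutely_integrable_on {a..b}" by (rule Gi)
  qed
  define w where "w s = gradV' (X s) \<bullet> G s" for s
  have wint: "w integrable_on {a..b}" using wi unfolding w_def absolutely_integrable_on_def by blast
  define W where "W t = V (X t) - integral {a..t} w" for t
  have Wd: "(W has_derivative (\<lambda>h. 0)) (at t0 within {a..b})" if t0: "t0 \<in> {a..b}" for t0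
  proof (subst has_derivative_within_alt, intro conjI allI impI)
    show "bounded_linear (\<lambda>h::real. 0::real)" by simp
    fix e :: real assume e: "e > 0"
    define e1 where "e1 = e / (2 * (M + 1))"
    have e1: "e1 > 0" using e M0 by (simp add: e1_def)
    define z0 where "z0 = X t0"
    define g0 where "g0 = gradV' z0"
    obtain d1 where d1: "d1 > 0" "\<And>y. norm (y - z0) < d1 \<Longrightarrow> norm (V y - V z0 - g0 \<bullet> (y - z0)) \<le> e1 * norm (y - z0)"
      using Vd[of z0, unfolded has_derivative_within_alt] e1 unfolding g0_def by blast
    obtain d2 where d2: "d2 > 0" "\<And>s. s \<in> {a..b} \<Longrightarrow> dist s t0 < d2 \<Longrightarrow> dist (gradV' (X s)) g0 < e1"
      using gXc t0 e1 unfolding continuous_on_iff g0_def z0_def by blast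
    have key: "\<bar>g0 \<bullet> (X s2 - X s1) - integral {s1..s2} w\<bar> \<le> e1 * M * (s2 - s1)"
      if s: "a \<le> s1" "s1 \<le> s2" "s2 \<le> b" "s2 - s1 < d2" "t0 = s1 \<or> t0 = s2" for s1 s2
    proof -
      have Gi12: "G integrable_on {s1..s2}" using s by (intro integrable_subinterval_real[OF Gint]) auto
      have wi12: "w integrable_on {s1..s2}" using s by (intro integrable_subinterval_real[OF wint]) auto
      have "g0 \<bullet> (X s2 - X s1) = integral {s1..s2} (\<lambda>s. G s \<bullet> g0)"
        using Xdiff[OF s(1-3)] integral_component_eq[OF Gi12, of g0] by (simp add: inner_commute)
      then have "g0 \<bullet> (X s2 - X s1) - integral {s1..s2} w = integral {s1..s2} (\<lambda>s. G s \<bullet> g0 - w s)"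
        using Gi12 wi12 by (simp add: integral_diff integrable_component)
      also have "\<bar>\<dots>\<bar> \<le> (e1 * M) * (s2 - s1)"
      proof -
        have "norm (integral {s1..s2} (\<lambda>s. G s \<bullet> g0 - w s)) \<le> (e1 * M) * (s2 - s1)"
        proof (rule integral_bound_const)
          show "(\<lambda>s. G s \<bullet> g0 - w s) integrable_on {s1..s2}"
            using Gi12 wi12 by (intro integrable_diff integrable_component)
          show "s1 \<le> s2" by fact
          fix r assume r: "r \<in> {s1..s2}"
          have "G r \<bullet> g0 - w r = (g0 - gradV' (X r)) \<bullet> G r"
            by (simp only: w_def inner_diff_left inner_commute[of "G r" g0])
          also have "norm \<dots> \<le> norm (g0 - gradV' (X r)) * norm (G r)"
            using Cauchy_Schwarz_ineq2 by simp
          also have "\<dots> \<le> e1 * M"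
          proof (rule mult_mono)
            have "dist (gradV' (X r)) g0 < e1"
              using r s by (intro d2(2)) (auto simp: dist_real_def)
            then show "norm (g0 - gradV' (X r)) \<le> e1" by (simp add: dist_norm norm_minus_commute)
            show "norm (G r) \<le> M" using r s by (intro GM) auto
          qed (use e1 in auto)
          finally show "norm (G r \<bullet> g0 - w r) \<le> e1 * M" .
        qed
        then show ?thesis by simp
      qed
      finally show ?thesis by simp
    qed
    define d where "d = min d2 (d1 / (M + 1))"
    show "\<exists>d>0. \<forall>y\<in>{a..b}. norm (y - t0) < d \<longrightarrow> norm (W y - W t0 - 0) \<le> e * norm (y - t0)"
    proof (intro exI[of _ d] conjI ballI impI)
      show "d > 0" using d1 d2 M0 by (simp add: d_def)
      fix y assume y: "y \<in> {a..b}" "norm (y - t0) < d"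
      have Xy: "norm (X y - z0) \<le> M * \<bar>y - t0\<bar>"
        using Xlip[of t0 y] Xlip[of y t0] t0 y(1) unfolding z0_def
        by (cases "t0 \<le> y") (auto simp: norm_minus_commute)
      have "M * \<bar>y - t0\<bar> \<le> (M + 1) * \<bar>y - t0\<bar>" by (simp add: mult_right_mono)
      also have "(M + 1) * \<bar>y - t0\<bar> < d1"
        using y(2) M0 by (simp add: d_def field_simps)
      finally have Xyd: "norm (X y - z0) < d1" using Xy by linarith
      have b1: "\<bar>V (X y) - V z0 - g0 \<bullet> (X y - z0)\<bar> \<le> e1 * M * \<bar>y - t0\<bar>"
      proof -
        have "\<bar>V (X y) - V z0 - g0 \<bullet> (X y - z0)\<bar> \<le> e1 * norm (X y - z0)" using d1(2)[OF Xyd] by simp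
        also have "\<dots> \<le> e1 * (M * \<bar>y - t0\<bar>)" using Xy e1 by (intro mult_left_mono) auto
        finally show ?thesis by (simp add: mult.assoc)
      qed
      have b2: "\<bar>g0 \<bullet> (X y - z0) - (integral {a..y} w - integral {a..t0} w)\<bar> \<le> e1 * M * \<bar>y - t0\<bar>"
      proof (cases "t0 \<le> y")
        case True
        have "integral {a..y} w - integral {a..t0} w = integral {t0..y} w"
          using t0 y True by (intro integral_diff_interval[OF wint]) auto
        then show ?thesis using key[of t0 y] t0 y True by (auto simp: d_def z0_def)
      next
        case False
        have "integral {a..t0} w - integral {a..y} w = integral {y..t0} w"
          using t0 y False by (intro integral_diff_interval[OF wint]) auto
        moreover have "\<bar>g0 \<bullet> (X t0 - X y) - integral {y..t0} w\<bar> \<le> e1 * M * (t0 - y)"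
          using key[of y t0] t0 y False by (auto simp: d_def)
        ultimately show ?thesis using False
          by (auto simp: z0_def inner_diff_right abs_minus_commute algebra_simps)
      qed
      have "\<bar>W y - W t0\<bar> \<le> 2 * (e1 * M) * \<bar>y - t0\<bar>"
      proof -
        have "W y - W t0 = (V (X y) - V z0 - g0 \<bullet> (X y - z0)) + (g0 \<bullet> (X y - z0) - (integral {a..y} w - integral {a..t0} w))"
          unfolding W_def z0_def by simp
        then show ?thesis using b1 b2 by linarith
      qed
      also have "2 * (e1 * M) \<le> e"
        using e M0 by (simp add: e1_def field_simps)
      then have "2 * (e1 * M) * \<bar>y - t0\<bar> \<le> e * \<bar>y - t0\<bar>" by (simp add: mult_right_mono)
      finally show "norm (W y - W t0 - 0) \<le> e * norm (y - t0)" by simp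
    qed
  qed
  obtain c where "\<And>t. t \<in> {a..b} \<Longrightarrow> W t = c"
    using has_derivative_zero_constant[of "{a..b}" W] Wd by (auto simp: convex_real_interval)
  then have "W b = W a" using ab by auto
  moreover have eqw: "(\<lambda>s. gradV' (X s) \<bullet> G s) = w" by (simp add: w_def fun_eq_iff)
  ultimately show "V (X b) - V (X a) = integral {a..b} (\<lambda>s. gradV' (X s) \<bullet> G s)"
    by (simp add: W_def eqw algebra_simps)
qed

lemma gfun_bound: "\<bar>gfun p \<phi> c \<tau>\<bar> \<le> (\<Sum>j\<le>p. \<bar>c j\<bar>) * (\<Sum>j\<le>p. \<bar>\<phi> j \<tau>\<bar>)"
proof -
  have "\<bar>gfun p \<phi> c \<tau>\<bar> \<le> (\<Sum>j\<le>p. \<bar>c j\<bar> * \<bar>\<phi> j \<tau>\<bar>)"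
    unfolding gfun_def by (rule order_trans[OF sum_abs]) (simp add: abs_mult)
  also have "\<dots> \<le> (\<Sum>j\<le>p. \<bar>c j\<bar> * (\<Sum>l\<le>p. \<bar>\<phi> l \<tau>\<bar>))"
    by (intro sum_mono mult_left_mono) (auto intro: member_le_sum)
  finally show ?thesis by (simp add: sum_distrib_right)
qed

lemma vec_norm_bound:
  fixes v :: "real^'m"
  assumes "\<And>i. \<bar>v $ i\<bar> \<le> B"
  shows "norm v \<le> real CARD('m) * B"
proof -
  have "norm v \<le> (\<Sum>i\<in>UNIV. \<bar>v $ i\<bar>)" by (rule norm_le_l1_cart)
  also have "\<dots> \<le> (\<Sum>i\<in>(UNIV::'m set). B)" by (intro sum_mono assms)
  finally show ?thesis by simp
qed

locale sys =
  fixes f :: "real^'n \<Rightarrow> real^'m \<Rightarrow> real^'q \<Rightarrow> real^'n"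
    and \<gamma> :: "real^'n \<Rightarrow> real^'m"
    and V :: "real^'n \<Rightarrow> real"
    and gradV :: "real^'n \<Rightarrow> real^'n"
    and \<alpha>1 \<alpha>2 \<alpha>3 \<rho>1 \<rho>2 :: "real \<Rightarrow> real"
    and D T \<sigma> r :: real
    and p :: nat
    and \<phi> :: "nat \<Rightarrow> real \<Rightarrow> real"
  assumes A1_V: "\<And>z. (V has_derivative (\<lambda>h. gradV z \<bullet> h)) (at z)"
    and A1_C1: "continuous_on UNIV gradV"
    and A1_K: "class_Kinf \<alpha>1" "class_Kinf \<alpha>2" "class_Kinf \<alpha>3" "class_Kinf \<rho>1" "class_Kinf \<rho>2"
    and A1_sandwich: "\<And>z. \<alpha>1 (norm z) \<le> V z \<and> V z \<le> \<alpha>2 (norm z)"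
    and A1_ISS: "\<And>z e w. gradV z \<bullet> f z (\<gamma> z + e) w
                     \<le> - \<alpha>3 (norm z) + \<rho>1 (norm e) + \<rho>2 (norm w)"
    and A2_f: "\<And>C. compact C \<Longrightarrow> \<exists>L. L-lipschitz_on C (\<lambda>(z, v, w). f z v w)"
    and A2_\<gamma>: "\<And>C. compact C \<Longrightarrow> \<exists>L. L-lipschitz_on C \<gamma>"
    and A2_0: "f 0 0 0 = 0" "\<gamma> 0 = 0"
    and A3: "D \<ge> 0"
    and A4_C1: "\<And>j. j \<le> p \<Longrightarrow> \<exists>\<phi>'. continuous_on {0..} \<phi>'
                    \<and> (\<forall>\<tau>\<ge>0. (\<phi> j has_real_derivative \<phi>' \<tau>) (at \<tau> within {0..}))"
    and A4_const: "\<exists>c. c \<noteq> 0 \<and> (\<forall>\<tau>\<ge>0. \<phi> 0 \<tau> = c)"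
    and A4_T: "T > 0"
    and A4_indep: "\<And>c. (\<forall>\<tau>\<in>{0..T}. gfun p \<phi> c \<tau> = 0) \<Longrightarrow> \<forall>j\<le>p. c j = 0"
    and \<sigma>: "0 < \<sigma>" "\<sigma> < 1"
    and r: "0 \<le> r"
begin

definition "eps = trig_eps \<alpha>2 \<alpha>3 \<rho>2 D \<sigma>"
definition "\<kappa> = \<alpha>3 (Kinv \<alpha>2 eps)"

lemma eps_nonneg: "0 \<le> eps"
proof -
  have "0 \<le> 2 * \<rho>2 D / \<sigma>" using K_nonneg[OF A1_K(5) A3] \<sigma> by simp
  then show ?thesis unfolding eps_def trig_eps_def
    using K_nonneg[OF A1_K(2) Kinv_right(2)[OF A1_K(3)]] by blast
qed

lemma V_nonneg: "0 \<le> V z"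
  using A1_sandwich[of z] K_nonneg[OF A1_K(1), of "norm z"] by simp

lemma V_ge_eps:
  assumes "V z \<ge> eps"
  shows "\<alpha>3 (norm z) \<ge> 2 * \<rho>2 D / \<sigma>" "\<alpha>3 (norm z) \<ge> \<kappa>" "norm z \<ge> Kinv \<alpha>2 eps"
proof -
  have q0: "0 \<le> 2 * \<rho>2 D / \<sigma>" using K_nonneg[OF A1_K(5) A3] \<sigma> by simp
  have "\<alpha>2 (norm z) \<ge> eps" using assms A1_sandwich[of z] by linarith
  then have "\<alpha>2 (norm z) \<ge> \<alpha>2 (Kinv \<alpha>3 (2 * \<rho>2 D / \<sigma>))" by (simp add: eps_def trig_eps_def)
  then have "norm z \<ge> Kinv \<alpha>3 (2 * \<rho>2 D / \<sigma>)"
    using K_mono(1)[OF A1_K(2) Kinv_right(2)[OF A1_K(3) q0] norm_ge_zero[of z]] by simp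
  then show "\<alpha>3 (norm z) \<ge> 2 * \<rho>2 D / \<sigma>"
    using K_ge_Kinv[OF A1_K(3) norm_ge_zero[of z] q0] by simp
  show nz: "norm z \<ge> Kinv \<alpha>2 eps"
    using K_ge_Kinv[OF A1_K(2) norm_ge_zero[of z] eps_nonneg] \<open>\<alpha>2 (norm z) \<ge> eps\<close> by simp
  show "\<alpha>3 (norm z) \<ge> \<kappa>"
    unfolding \<kappa>_def using K_mono(1)[OF A1_K(3) Kinv_right(2)[OF A1_K(2) eps_nonneg] norm_ge_zero[of z]] nz by simp
qed

lemma ISS_decay:
  assumes "V z \<ge> eps" "\<rho>1 (norm e) < \<sigma> / 2 * \<alpha>3 (norm z)" "norm w \<le> D"
  shows "gradV z \<bullet> f z (\<gamma> z + e) w \<le> - (1 - \<sigma>) * \<kappa>"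
proof -
  have "\<rho>2 (norm w) \<le> \<rho>2 D" using K_mono(1)[OF A1_K(5) norm_ge_zero[of w] A3] assms(3) by simp
  moreover have "\<rho>2 D \<le> \<sigma> / 2 * \<alpha>3 (norm z)" using V_ge_eps(1)[OF assms(1)] \<sigma> by (simp add: field_simps)
  ultimately have "gradV z \<bullet> f z (\<gamma> z + e) w \<le> - (1 - \<sigma>) * \<alpha>3 (norm z)"
    using A1_ISS[of z e w] assms(2) by (simp add: algebra_simps)
  also have "\<dots> \<le> - (1 - \<sigma>) * \<kappa>" using V_ge_eps(2)[OF assms(1)] \<sigma> by (simp add: mult_left_mono)
  finally show ?thesis .
qed

lemma V_cont: "continuous_on S V"
  using A1_V by (meson has_derivative_continuous continuous_at_imp_continuous_on)

lemma phi_cont: "j \<le> p \<Longrightarrow> continuous_on {0..} (\<phi> j)"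
proof -
  assume j: "j \<le> p"
  obtain \<phi>' where d: "\<forall>\<tau>\<ge>0. (\<phi> j has_real_derivative \<phi>' \<tau>) (at \<tau> within {0..})"
    using A4_C1[OF j] by blast
  show ?thesis unfolding continuous_on_eq_continuous_within
    using d by (auto intro: DERIV_continuous)
qed

definition "eta s = 1 / sqrt (real CARD('m)) * Kinv \<rho>1 (r * (\<sigma> / 2) * \<alpha>3 s)"

lemma eta_nonneg: "0 \<le> s \<Longrightarrow> 0 \<le> eta s"
proof -
  assume s: "0 \<le> s"
  have "0 \<le> r * (\<sigma> / 2) * \<alpha>3 s" using r \<sigma> K_nonneg[OF A1_K(3) s] by simp
  then show ?thesis unfolding eta_def using Kinv_right(2)[OF A1_K(4)] by simp
qed

context
  fixes d :: "real \<Rightarrow> real^'q" and x :: "real \<Rightarrow> real^'n" and u :: "real \<Rightarrow> real^'m"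
    and te :: "nat \<Rightarrow> ereal" and a :: "nat \<Rightarrow> 'm \<Rightarrow> nat \<Rightarrow> real" and xh :: "nat \<Rightarrow> real \<Rightarrow> real^'n"
  assumes cls: "closed_loop_solution f \<gamma> V \<alpha>2 \<alpha>3 \<rho>1 \<rho>2 D p \<phi> T \<sigma> r d x u te a xh"
begin

abbreviation "Tmax \<equiv> (SUP k. te k)"
abbreviation "tk k \<equiv> real_of_ereal (te k)"
abbreviation "Uk k t \<equiv> ((\<chi> i. gfun p \<phi> (a k i) (t - tk k)) :: real^'m)"

lemma dD: "0 \<le> t \<Longrightarrow> norm (d t) \<le> D"
  using cls unfolding closed_loop_solution_def Let_def by blast
lemma te0: "te 0 = 0"
  using cls unfolding closed_loop_solution_def Let_def by blast
lemma te_inc: "te k < \<infinity> \<Longrightarrow> te k < te (Suc k)"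
  using cls unfolding closed_loop_solution_def Let_def by blast
lemma te_inf: "te k = \<infinity> \<Longrightarrow> te (Suc k) = \<infinity>"
  using cls unfolding closed_loop_solution_def Let_def by blast
lemma u_piece: "te k \<le> ereal t \<Longrightarrow> ereal t < te (Suc k) \<Longrightarrow> u t = Uk k t"
  using cls unfolding closed_loop_solution_def Let_def by blast
lemma x_int: "0 \<le> t \<Longrightarrow> ereal t < Tmax \<Longrightarrow>
   (\<lambda>s. f (x s) (u s) (d s)) absolutely_integrable_on {0..t}
   \<and> x t = x 0 + integral {0..t} (\<lambda>s. f (x s) (u s) (d s))"
  using cls unfolding closed_loop_solution_def Let_def by blast

lemma kfacts:
  assumes "te k < \<infinity>"
  shows "xh k 0 = x (tk k)"
   and "\<forall>\<tau>\<in>{0..T}. (xh k has_vector_derivative f (xh k \<tau>) (\<gamma> (xh k \<tau>)) 0) (at \<tau> within {0..T})"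
   and "\<forall>i. \<bar>gfun p \<phi> (a k i) 0 - \<gamma> (xh k 0) $ i\<bar> \<le> eta (norm (xh k 0))
         \<and> (\<forall>c. \<bar>gfun p \<phi> c 0 - \<gamma> (xh k 0) $ i\<bar> \<le> eta (norm (xh k 0)) \<longrightarrow>
              integral {0..T} (\<lambda>\<tau>. (gfun p \<phi> (a k i) \<tau> - \<gamma> (xh k \<tau>) $ i)\<^sup>2)
              \<le> integral {0..T} (\<lambda>\<tau>. (gfun p \<phi> c \<tau> - \<gamma> (xh k \<tau>) $ i)\<^sup>2))"
   and "\<forall>t. tk k < t \<and> ereal t < te (Suc k) \<longrightarrow>
          \<not> (\<rho>1 (norm (Uk k t - \<gamma> (x t))) \<ge> \<sigma> / 2 * \<alpha>3 (norm (x t)) \<and> V (x t) \<ge> eps)"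
   and "te (Suc k) < \<infinity> \<longrightarrow> (\<rho>1 (norm (Uk k (tk (Suc k)) - \<gamma> (x (tk (Suc k)))))
            \<ge> \<sigma> / 2 * \<alpha>3 (norm (x (tk (Suc k)))) \<and> V (x (tk (Suc k))) \<ge> eps)"
  using cls assms unfolding closed_loop_solution_def Let_def eps_def eta_def by blast+

lemma te_nonneg: "0 \<le> te k"
proof (induction k)
  case 0 then show ?case by (simp add: te0)
next
  case (Suc k)
  show ?case
  proof (cases "te k = \<infinity>")
    case True then show ?thesis using te_inf by simp
  next
    case False then have "te k < te (Suc k)" using te_inc by (simp add: less_top)
    then show ?thesis using Suc by simp
  qed
qed

lemma te_step: "te k \<le> te (Suc k)"
proof (cases "te k = \<infinity>")
  case True then show ?thesis using te_inf by simp
next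
  case False then show ?thesis using te_inc[of k] by (simp add: less_top less_imp_le)
qed

lemma te_mono: "k \<le> l \<Longrightarrow> te k \<le> te l"
  by (induction l rule: dec_induct) (auto intro: order_trans te_step)

lemma te_fin: "te k < \<infinity> \<Longrightarrow> te k = ereal (tk k)"
  using te_nonneg[of k] by (cases "te k") auto

lemma tk_nonneg: "0 \<le> tk k"
  using te_nonneg[of k] by (cases "te k") auto

lemma te_lt_Tmax: "te k < \<infinity> \<Longrightarrow> te k < Tmax"
  using te_inc[of k] by (meson SUP_upper UNIV_I less_le_trans)

lemma piece_exists:
  assumes "0 \<le> s" "ereal s < te K"
  shows "\<exists>k<K. te k \<le> ereal s \<and> ereal s < te (Suc k)"
  using assms(2)
proof (induction K)
  case 0 then show ?case using assms(1) by (simp add: te0)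
next
  case (Suc K)
  show ?case
  proof (cases "te K \<le> ereal s")
    case True then show ?thesis using Suc.prems by auto
  next
    case False then show ?thesis using Suc.IH by (auto simp: not_le less_Suc_eq)
  qed
qed

lemma piece_exists_T:
  assumes "0 \<le> s" "ereal s < Tmax"
  shows "\<exists>k. te k \<le> ereal s \<and> ereal s < te (Suc k)"
proof -
  obtain K where "ereal s < te K" using assms(2) by (auto simp: less_SUP_iff)
  then show ?thesis using piece_exists[OF assms(1)] by blast
qed



lemma x_cont: assumes "0 \<le> t'" "ereal t' < Tmax" shows "continuous_on {0..t'} x"
proof -
  have Fi: "(\<lambda>s. f (x s) (u s) (d s)) integrable_on {0..t'}"
    using x_int[OF assms] absolutely_integrable_on_def by blast
  have "continuous_on {0..t'} (\<lambda>t. x 0 + integral {0..t} (\<lambda>s. f (x s) (u s) (d s)))"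
    by (intro continuous_intros indefinite_integral_continuous_1 Fi)
  moreover have "x t = x 0 + integral {0..t} (\<lambda>s. f (x s) (u s) (d s))" if "t \<in> {0..t'}" for t
    using x_int[of t] that assms(2) by (meson atLeastAtMost_iff ereal_less_eq(3) le_less_trans)
  ultimately show ?thesis using continuous_on_eq by (metis (no_types, lifting))
qed

lemma u_bound: assumes "0 \<le> t'" "ereal t' < Tmax" shows "\<exists>Ub. \<forall>s\<in>{0..t'}. norm (u s) \<le> Ub"
proof -
  obtain K where K: "ereal t' < te K" using assms(2) by (auto simp: less_SUP_iff)
  have "continuous_on {0..t'} (\<lambda>\<tau>. \<Sum>j\<le>p. \<bar>\<phi> j \<tau>\<bar>)"
    by (intro continuous_intros continuous_on_subset[OF phi_cont]) auto
  then have "bounded ((\<lambda>\<tau>. \<Sum>j\<le>p. \<bar>\<phi> j \<tau>\<bar>) ` {0..t'})"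
    by (intro compact_imp_bounded compact_continuous_image compact_Icc)
  then obtain P where "\<forall>y\<in>(\<lambda>\<tau>. \<Sum>j\<le>p. \<bar>\<phi> j \<tau>\<bar>) ` {0..t'}. norm y \<le> P" by (auto simp: bounded_iff)
  then have P: "\<And>\<tau>. \<tau> \<in> {0..t'} \<Longrightarrow> (\<Sum>j\<le>p. \<bar>\<phi> j \<tau>\<bar>) \<le> P" by force
  define A where "A = (\<Sum>k<K. \<Sum>i\<in>UNIV. \<Sum>j\<le>p. \<bar>a k i j\<bar>)"
  have Ak: "(\<Sum>j\<le>p. \<bar>a k i j\<bar>) \<le> A" if "k < K" for k i
  proof -
    have "(\<Sum>j\<le>p. \<bar>a k i j\<bar>) \<le> (\<Sum>i\<in>UNIV. \<Sum>j\<le>p. \<bar>a k i j\<bar>)"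
      by (rule member_le_sum) (auto intro: sum_nonneg)
    also have "\<dots> \<le> A" unfolding A_def using that
      by (intro member_le_sum[of k "{..<K}" "\<lambda>k. \<Sum>i\<in>UNIV. \<Sum>j\<le>p. \<bar>a k i j\<bar>"]) (auto intro!: sum_nonneg)
    finally show ?thesis .
  qed
  show ?thesis
  proof (intro exI[of _ "real CARD('m) * (A * P)"] ballI)
    fix s assume s: "s \<in> {0..t'}"
    then have "ereal s < te K" using K by (meson atLeastAtMost_iff ereal_less_eq(3) le_less_trans)
    then obtain k where k: "k < K" "te k \<le> ereal s" "ereal s < te (Suc k)"
      using piece_exists[of s K] s by auto
    have fin: "te k < \<infinity>" using k(2) by (cases "te k") auto
    have tks: "tk k \<le> s" using k(2) te_fin[OF fin] by (metis ereal_less_eq(3))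
    have "u s = Uk k s" using u_piece[OF k(2,3)] .
    also have "norm \<dots> \<le> real CARD('m) * (A * P)"
    proof (rule vec_norm_bound)
      fix i
      have "\<bar>gfun p \<phi> (a k i) (s - tk k)\<bar> \<le> (\<Sum>j\<le>p. \<bar>a k i j\<bar>) * (\<Sum>j\<le>p. \<bar>\<phi> j (s - tk k)\<bar>)"
        by (rule gfun_bound)
      also have "\<dots> \<le> A * P"
        using tks s tk_nonneg[of k]
        by (intro mult_mono Ak k P) (auto intro: sum_nonneg order_trans[OF sum_nonneg Ak[OF k(1)]])
      finally show "\<bar>(\<chi> i. gfun p \<phi> (a k i) (s - tk k)) $ i\<bar> \<le> A * P" by simp
    qed
    finally show "norm (u s) \<le> real CARD('m) * (A * P)" .
  qed
qed

end

lemma f_bounded: "\<exists>M. \<forall>z v w. norm z \<le> A \<and> norm v \<le> B \<and> norm w \<le> C \<longrightarrow> norm (f z v w) \<le> M"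
proof -
  define S where "S = cball (0::real^'n) A \<times> cball (0::real^'m) B \<times> cball (0::real^'q) C"
  have cS: "compact S" unfolding S_def by (intro compact_Times compact_cball)
  obtain L where "L-lipschitz_on S (\<lambda>(z, v, w). f z v w)" using A2_f[OF cS] by blast
  then have "continuous_on S (\<lambda>(z, v, w). f z v w)" by (rule lipschitz_on_continuous_on)
  then have "bounded ((\<lambda>(z, v, w). f z v w) ` S)" by (intro compact_imp_bounded compact_continuous_image cS)
  then obtain M where M: "\<And>y. y \<in> (\<lambda>(z, v, w). f z v w) ` S \<Longrightarrow> norm y \<le> M" by (auto simp: bounded_iff)
  show ?thesis
  proof (intro exI[of _ M] allI impI)
    fix z :: "real^'n" and v :: "real^'m" and w :: "real^'q"
    assume "norm z \<le> A \<and> norm v \<le> B \<and> norm w \<le> C"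
    then have "(z, v, w) \<in> S" by (simp add: S_def)
    then show "norm (f z v w) \<le> M" using M by force
  qed
qed


definition "mG = (SOME m. m > 0 \<and> (\<forall>c. m * (\<Sum>j\<le>p. (c j)^2) \<le> integral {0..T} (\<lambda>\<tau>. (gfun p \<phi> c \<tau>)^2)))"

lemma mG: "mG > 0" "\<And>c. mG * (\<Sum>j\<le>p. (c j)^2) \<le> integral {0..T} (\<lambda>\<tau>. (gfun p \<phi> c \<tau>)^2)"
proof -
  have "\<exists>m>0. \<forall>c. m * (\<Sum>j\<le>p. (c j)^2) \<le> integral {0..T} (\<lambda>\<tau>. (gfun p \<phi> c \<tau>)^2)"
    by (rule gram[OF continuous_on_subset[OF phi_cont] A4_T A4_indep]) auto
  then have "mG > 0 \<and> (\<forall>c. mG * (\<Sum>j\<le>p. (c j)^2) \<le> integral {0..T} (\<lambda>\<tau>. (gfun p \<phi> c \<tau>)^2))"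
    unfolding mG_def by (rule someI_ex[where P = "\<lambda>m. m > 0 \<and> (\<forall>c. m * (\<Sum>j\<le>p. (c j)^2) \<le> integral {0..T} (\<lambda>\<tau>. (gfun p \<phi> c \<tau>)^2))"])
  then show "mG > 0" "\<And>c. mG * (\<Sum>j\<le>p. (c j)^2) \<le> integral {0..T} (\<lambda>\<tau>. (gfun p \<phi> c \<tau>)^2)" by auto
qed

lemma gfun_cont: "continuous_on {0..T} (gfun p \<phi> c)"
  unfolding gfun_def by (intro continuous_intros continuous_on_subset[OF phi_cont]) auto

lemma coef_bound:
  assumes uhc: "continuous_on {0..T} uh" and uhb: "\<And>\<tau>. \<tau> \<in> {0..T} \<Longrightarrow> \<bar>uh \<tau>\<bar> \<le> B"
    and s0: "0 \<le> s"
    and opt: "\<forall>c'. \<bar>gfun p \<phi> c' 0 - uh 0\<bar> \<le> eta s \<longrightarrow>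
       integral {0..T} (\<lambda>\<tau>. (gfun p \<phi> c \<tau> - uh \<tau>)^2) \<le> integral {0..T} (\<lambda>\<tau>. (gfun p \<phi> c' \<tau> - uh \<tau>)^2)"
  shows "(\<Sum>j\<le>p. (c j)^2) \<le> 10 * T * B^2 / mG"
proof -
  obtain c0 where c0: "c0 \<noteq> 0" "\<And>\<tau>. \<tau> \<ge> 0 \<Longrightarrow> \<phi> 0 \<tau> = c0" using A4_const by blast
  define cs where "cs j = (if j = 0 then uh 0 / c0 else 0)" for j :: nat
  have gcs: "gfun p \<phi> cs \<tau> = uh 0" if "\<tau> \<ge> 0" for \<tau>
  proof -
    have "gfun p \<phi> cs \<tau> = (\<Sum>j\<le>p. if j = 0 then uh 0 / c0 * \<phi> 0 \<tau> else 0)"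
      unfolding gfun_def cs_def by (intro sum.cong) auto
    also have "\<dots> = uh 0 / c0 * \<phi> 0 \<tau>" by (simp add: sum.delta)
    also have "\<dots> = uh 0" using c0 that by simp
    finally show ?thesis .
  qed
  have B0: "0 \<le> B" using uhb[of 0] A4_T by auto
  have Jc: "integral {0..T} (\<lambda>\<tau>. (gfun p \<phi> c \<tau> - uh \<tau>)^2) \<le> integral {0..T} (\<lambda>\<tau>. (gfun p \<phi> cs \<tau> - uh \<tau>)^2)"
    using opt eta_nonneg[OF s0] gcs[of 0] by auto
  also have "\<dots> \<le> integral {0..T} (\<lambda>\<tau>. (2 * B)^2)"
  proof (rule integral_le)
    show "(\<lambda>\<tau>. (gfun p \<phi> cs \<tau> - uh \<tau>)^2) integrable_on {0..T}"
      by (intro integrable_continuous_interval continuous_intros gfun_cont uhc)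
    fix \<tau> assume t: "\<tau> \<in> {0..T}"
    have "\<bar>gfun p \<phi> cs \<tau> - uh \<tau>\<bar> \<le> 2 * B" using gcs[of \<tau>] t uhb[OF t] uhb[of 0] A4_T by auto
    then show "(gfun p \<phi> cs \<tau> - uh \<tau>)^2 \<le> (2 * B)^2"
      by (metis abs_le_square_iff abs_of_nonneg B0 mult_nonneg_nonneg zero_le_numeral)
  qed auto
  finally have J: "integral {0..T} (\<lambda>\<tau>. (gfun p \<phi> c \<tau> - uh \<tau>)^2) \<le> T * (4 * B^2)"
    using A4_T by (simp add: power_mult_distrib)
  have "integral {0..T} (\<lambda>\<tau>. (gfun p \<phi> c \<tau>)^2) \<le> integral {0..T} (\<lambda>\<tau>. 2 * (gfun p \<phi> c \<tau> - uh \<tau>)^2 + 2 * B^2)"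
  proof (rule integral_le)
    show "(\<lambda>\<tau>. (gfun p \<phi> c \<tau>)^2) integrable_on {0..T}"
      by (intro integrable_continuous_interval continuous_intros gfun_cont)
    show "(\<lambda>\<tau>. 2 * (gfun p \<phi> c \<tau> - uh \<tau>)^2 + 2 * B^2) integrable_on {0..T}"
      by (intro integrable_continuous_interval continuous_intros gfun_cont uhc)
    fix \<tau> assume t: "\<tau> \<in> {0..T}"
    have u2: "(uh \<tau>)^2 \<le> B^2" by (metis abs_le_square_iff abs_of_nonneg B0 uhb[OF t])
    have eq: "2 * (gfun p \<phi> c \<tau> - uh \<tau>)^2 + 2 * (uh \<tau>)^2 - (gfun p \<phi> c \<tau>)^2 = (gfun p \<phi> c \<tau> - 2 * uh \<tau>)^2"
      by algebra
    have "0 \<le> (gfun p \<phi> c \<tau> - 2 * uh \<tau>)^2" by simp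
    then have "(gfun p \<phi> c \<tau>)^2 \<le> 2 * (gfun p \<phi> c \<tau> - uh \<tau>)^2 + 2 * (uh \<tau>)^2"
      using eq by linarith
    then show "(gfun p \<phi> c \<tau>)^2 \<le> 2 * (gfun p \<phi> c \<tau> - uh \<tau>)^2 + 2 * B^2" using u2 by linarith
  qed
  also have "\<dots> = 2 * integral {0..T} (\<lambda>\<tau>. (gfun p \<phi> c \<tau> - uh \<tau>)^2) + T * (2 * B^2)"
  proof -
    have i1: "(\<lambda>\<tau>. (gfun p \<phi> c \<tau> - uh \<tau>)^2) integrable_on {0..T}"
      by (intro integrable_continuous_interval continuous_intros gfun_cont uhc)
    have "integral {0..T} (\<lambda>\<tau>. 2 * (gfun p \<phi> c \<tau> - uh \<tau>)^2 + 2 * B^2)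
        = integral {0..T} (\<lambda>\<tau>. 2 * (gfun p \<phi> c \<tau> - uh \<tau>)^2) + integral {0..T} (\<lambda>\<tau>. 2 * B^2)"
      by (rule integral_add) (use integrable_on_cmult_left[OF i1, of 2] in auto)
    then show ?thesis using A4_T by simp
  qed
  also have "\<dots> \<le> 10 * T * B^2" using J A4_T by simp
  finally have "mG * (\<Sum>j\<le>p. (c j)^2) \<le> 10 * T * B^2" using mG(2)[of c] by linarith
  then show ?thesis using mG(1) by (simp add: field_simps mult.commute)
qed

lemma coef_bound_abs:
  assumes "(\<Sum>j\<le>p. (c j)^2) \<le> Q" "j \<le> p"
  shows "\<bar>c j\<bar> \<le> sqrt Q"
proof -
  have "(c j)^2 \<le> (\<Sum>j\<le>p. (c j)^2)" using assms(2) by (intro member_le_sum) auto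
  then have "\<bar>c j\<bar>^2 \<le> Q" using assms(1) by simp
  then show ?thesis by (rule real_le_rsqrt)
qed


lemma Pphi_ex: "\<exists>P. \<forall>\<tau>\<in>{0..T}. (\<Sum>j\<le>p. \<bar>\<phi> j \<tau>\<bar>) \<le> P"
proof -
  have "continuous_on {0..T} (\<lambda>\<tau>. \<Sum>j\<le>p. \<bar>\<phi> j \<tau>\<bar>)"
    by (intro continuous_intros continuous_on_subset[OF phi_cont]) auto
  then have "bounded ((\<lambda>\<tau>. \<Sum>j\<le>p. \<bar>\<phi> j \<tau>\<bar>) ` {0..T})"
    by (intro compact_imp_bounded compact_continuous_image compact_Icc)
  then obtain P where "\<forall>y\<in>(\<lambda>\<tau>. \<Sum>j\<le>p. \<bar>\<phi> j \<tau>\<bar>) ` {0..T}. norm y \<le> P" by (auto simp: bounded_iff)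
  then show ?thesis by force
qed

definition "Pphi = (SOME P. \<forall>\<tau>\<in>{0..T}. (\<Sum>j\<le>p. \<bar>\<phi> j \<tau>\<bar>) \<le> P)"

lemma Pphi: "\<tau> \<in> {0..T} \<Longrightarrow> (\<Sum>j\<le>p. \<bar>\<phi> j \<tau>\<bar>) \<le> Pphi"
  using someI_ex[OF Pphi_ex] unfolding Pphi_def by blast

lemma Pphi_nonneg: "0 \<le> Pphi"
proof -
  have "0 \<le> (\<Sum>j\<le>p. \<bar>\<phi> j 0\<bar>)" by (intro sum_nonneg) auto
  moreover have "(\<Sum>j\<le>p. \<bar>\<phi> j 0\<bar>) \<le> Pphi" using A4_T by (intro Pphi) auto
  ultimately show ?thesis by linarith
qed

lemma phi_lip: "j \<le> p \<Longrightarrow> \<exists>L. \<forall>h\<in>{0..T}. \<bar>\<phi> j h - \<phi> j 0\<bar> \<le> L * h"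
proof -
  assume j: "j \<le> p"
  obtain \<phi>' where c: "continuous_on {0..} \<phi>'" and d: "\<And>\<tau>. \<tau> \<ge> 0 \<Longrightarrow> (\<phi> j has_real_derivative \<phi>' \<tau>) (at \<tau> within {0..})"
    using A4_C1[OF j] by blast
  have "bounded (\<phi>' ` {0..T})"
    by (intro compact_imp_bounded compact_continuous_image compact_Icc continuous_on_subset[OF c]) auto
  then obtain L where "\<forall>y\<in>\<phi>' ` {0..T}. norm y \<le> L" by (auto simp: bounded_iff)
  then have L: "\<And>\<tau>. \<tau> \<in> {0..T} \<Longrightarrow> \<bar>\<phi>' \<tau>\<bar> \<le> L" by force
  show ?thesis
  proof (intro exI[of _ L] ballI)
    fix h assume h: "h \<in> {0..T}"
    have "\<exists>\<xi>\<in>{0..h}. \<phi> j h - \<phi> j 0 = (\<lambda>y. \<phi>' \<xi> * y) (h - 0)"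
    proof (rule mvt_very_simple)
      show "0 \<le> h" using h by simp
      fix \<xi> assume "0 \<le> \<xi>" "\<xi> \<le> h"
      then have "(\<phi> j has_real_derivative \<phi>' \<xi>) (at \<xi> within {0..h})"
        by (intro DERIV_subset[OF d]) auto
      then show "(\<phi> j has_derivative (\<lambda>y. \<phi>' \<xi> * y)) (at \<xi> within {0..h})"
        by (simp add: has_field_derivative_def)
    qed
    then obtain \<xi> where \<xi>: "\<xi> \<in> {0..h}" "\<phi> j h - \<phi> j 0 = \<phi>' \<xi> * h" by auto
    have "\<bar>\<phi>' \<xi>\<bar> \<le> L" using \<xi>(1) h by (intro L) auto
    then show "\<bar>\<phi> j h - \<phi> j 0\<bar> \<le> L * h" using h \<xi>(2) by (simp add: abs_mult mult_right_mono)
  qed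
qed

lemma Lam_ex: "\<exists>Lam. \<forall>h\<in>{0..T}. (\<Sum>j\<le>p. \<bar>\<phi> j h - \<phi> j 0\<bar>) \<le> Lam * h"
proof -
  have "\<forall>j\<in>{..p}. \<exists>L. \<forall>h\<in>{0..T}. \<bar>\<phi> j h - \<phi> j 0\<bar> \<le> L * h" using phi_lip by auto
  then obtain Lf where Lf: "\<And>j h. j \<in> {..p} \<Longrightarrow> h \<in> {0..T} \<Longrightarrow> \<bar>\<phi> j h - \<phi> j 0\<bar> \<le> Lf j * h"
    by (metis bchoice)
  show ?thesis
  proof (intro exI[of _ "\<Sum>j\<le>p. Lf j"] ballI)
    fix h assume h: "h \<in> {0..T}"
    have "(\<Sum>j\<le>p. \<bar>\<phi> j h - \<phi> j 0\<bar>) \<le> (\<Sum>j\<le>p. Lf j * h)" by (intro sum_mono Lf h) auto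
    then show "(\<Sum>j\<le>p. \<bar>\<phi> j h - \<phi> j 0\<bar>) \<le> (\<Sum>j\<le>p. Lf j) * h" by (simp add: sum_distrib_right)
  qed
qed

definition "Lam = (SOME Lam. \<forall>h\<in>{0..T}. (\<Sum>j\<le>p. \<bar>\<phi> j h - \<phi> j 0\<bar>) \<le> Lam * h)"

lemma Lam: "h \<in> {0..T} \<Longrightarrow> (\<Sum>j\<le>p. \<bar>\<phi> j h - \<phi> j 0\<bar>) \<le> Lam * h"
  using someI_ex[OF Lam_ex] unfolding Lam_def by blast

lemma Lam_nonneg: "0 \<le> Lam"
proof -
  have "0 \<le> (\<Sum>j\<le>p. \<bar>\<phi> j T - \<phi> j 0\<bar>)" by (intro sum_nonneg) auto
  moreover have "(\<Sum>j\<le>p. \<bar>\<phi> j T - \<phi> j 0\<bar>) \<le> Lam * T" using A4_T by (intro Lam) auto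
  ultimately have "0 \<le> Lam * T" by linarith
  then show ?thesis using A4_T by (simp add: zero_le_mult_iff)
qed

definition "Lg R = (SOME L. L-lipschitz_on (cball 0 R) \<gamma>)"

lemma Lg: "(Lg R)-lipschitz_on (cball 0 R) \<gamma>"
  using someI_ex[OF A2_\<gamma>[OF compact_cball]] unfolding Lg_def .

lemma Lg_nonneg: "0 \<le> Lg R" using Lg lipschitz_on_nonneg by blast

lemma gamma_norm: "norm z \<le> R \<Longrightarrow> norm (\<gamma> z) \<le> Lg R * R"
proof -
  assume z: "norm z \<le> R"
  then have R: "0 \<le> R" using norm_ge_zero order_trans by blast
  have "dist (\<gamma> z) (\<gamma> 0) \<le> Lg R * dist z 0" by (rule lipschitz_onD[OF Lg]) (use z R in auto)
  also have "\<dots> \<le> Lg R * R" using z by (simp add: mult_left_mono Lg_nonneg)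
  finally show ?thesis using A2_0(2) by simp
qed

definition "ebar x0 = max eps (V x0)"
definition "Rr x0 = Kinv \<alpha>1 (ebar x0)"
definition "Bu x0 = Lg (Rr x0) * Rr x0"
definition "Ac x0 = sqrt (10 * T * (Bu x0)^2 / mG)"
definition "Ub x0 = real CARD('m) * (real (Suc p) * Ac x0 * Pphi)"
definition "Mf x0 = (SOME M. \<forall>z v w. norm z \<le> Rr x0 \<and> norm v \<le> Ub x0 \<and> norm w \<le> D \<longrightarrow> norm (f z v w) \<le> M)"
definition "Cc x0 = real CARD('m) * (real (Suc p) * Ac x0 * Lam) + Lg (Rr x0) * Mf x0"
definition "E0 x0 = Kinv \<rho>1 (r * (\<sigma> / 2) * \<alpha>3 (Rr x0))"
definition "E1 = Kinv \<rho>1 (\<sigma> / 2 * \<alpha>3 (Kinv \<alpha>2 eps))"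
definition "tau x0 = min T ((E1 - E0 x0) / (Cc x0 + 1))"

lemma Rr_nonneg: "0 \<le> Rr x0"
  unfolding Rr_def ebar_def using Kinv_right(2)[OF A1_K(1)] eps_nonneg by simp

lemma Ac_nonneg: "0 \<le> Ac x0"
  unfolding Ac_def using A4_T mG(1) by simp

lemma Ub_nonneg: "0 \<le> Ub x0"
  unfolding Ub_def using Ac_nonneg Pphi_nonneg by simp

lemma Mf: "norm z \<le> Rr x0 \<Longrightarrow> norm v \<le> Ub x0 \<Longrightarrow> norm w \<le> D \<Longrightarrow> norm (f z v w) \<le> Mf x0"
  using someI_ex[OF f_bounded[of "Rr x0" "Ub x0" D]] unfolding Mf_def by blast

lemma Mf_nonneg: "0 \<le> Mf x0"
proof -
  have "norm (f 0 0 0) \<le> Mf x0" using Mf[of 0 x0 0 0] Rr_nonneg[of x0] Ub_nonneg[of x0] A3 by simp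
  then show ?thesis by (meson norm_ge_zero order_trans)
qed

lemma Cc_nonneg: "0 \<le> Cc x0"
  unfolding Cc_def using Ac_nonneg Lam_nonneg Lg_nonneg Mf_nonneg by simp

lemma rb_facts:
  assumes rb: "r < r_bound \<alpha>1 \<alpha>2 \<alpha>3 eps (V x0)"
  shows "0 < eps" "E0 x0 < E1" "0 < tau x0"
proof -
  have num0: "0 \<le> \<alpha>3 (Kinv \<alpha>2 eps)" by (intro K_nonneg[OF A1_K(3)] Kinv_right(2)[OF A1_K(2) eps_nonneg])
  show ep: "0 < eps"
  proof (rule ccontr)
    assume "\<not> 0 < eps"
    then have "eps = 0" using eps_nonneg by simp
    then have "r_bound \<alpha>1 \<alpha>2 \<alpha>3 eps (V x0) = 0"
      by (simp add: r_bound_def Kinv_0[OF A1_K(2)] K_0[OF A1_K(3)])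
    then show False using rb r by simp
  qed
  have "0 < ebar x0" using ep by (simp add: ebar_def)
  then have R0: "0 < Rr x0" unfolding Rr_def using Kinv_mono(2)[OF A1_K(1), of 0 "ebar x0"] Kinv_0[OF A1_K(1)] by simp
  then have den: "0 < \<alpha>3 (Rr x0)" by (rule K_pos[OF A1_K(3)])
  have "r_bound \<alpha>1 \<alpha>2 \<alpha>3 eps (V x0) = \<alpha>3 (Kinv \<alpha>2 eps) / \<alpha>3 (Rr x0)"
    by (simp add: r_bound_def Rr_def ebar_def)
  then have "r * \<alpha>3 (Rr x0) < \<alpha>3 (Kinv \<alpha>2 eps)" using rb den by (simp add: pos_less_divide_eq)
  then have lt: "r * (\<sigma> / 2) * \<alpha>3 (Rr x0) < \<sigma> / 2 * \<alpha>3 (Kinv \<alpha>2 eps)" using \<sigma> by (simp add: mult.commute mult.left_commute)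
  have nn: "0 \<le> r * (\<sigma> / 2) * \<alpha>3 (Rr x0)" using r \<sigma> den by simp
  show E: "E0 x0 < E1" unfolding E0_def E1_def
    using Kinv_mono(2)[OF A1_K(4) nn] lt nn by simp
  show "0 < tau x0" unfolding tau_def using E A4_T Cc_nonneg[of x0] by simp
qed

lemma vec_norm_bound_sqrt:
  fixes v :: "real^'m"
  assumes "\<And>i. \<bar>v $ i\<bar> \<le> B"
  shows "norm v \<le> sqrt (real CARD('m)) * B"
proof -
  have B0: "0 \<le> B" using assms[of undefined] by linarith
  have "norm v = sqrt (\<Sum>i\<in>UNIV. (v $ i)^2)" by (simp add: norm_vec_def L2_set_def)
  also have "\<dots> \<le> sqrt (\<Sum>i\<in>(UNIV::'m set). B^2)"
    using assms B0 by (intro real_sqrt_le_mono sum_mono) (metis abs_le_square_iff abs_of_nonneg)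
  also have "\<dots> = sqrt (real CARD('m)) * B" using B0 by (simp add: real_sqrt_mult)
  finally show ?thesis .
qed


definition "Tb b = max 0 ((\<alpha>2 b - eps) / ((1 - \<sigma>) * \<kappa>))"

context
  fixes d :: "real \<Rightarrow> real^'q" and x :: "real \<Rightarrow> real^'n" and u :: "real \<Rightarrow> real^'m"
    and te :: "nat \<Rightarrow> ereal" and a :: "nat \<Rightarrow> 'm \<Rightarrow> nat \<Rightarrow> real" and xh :: "nat \<Rightarrow> real \<Rightarrow> real^'n"
  assumes cls: "closed_loop_solution f \<gamma> V \<alpha>2 \<alpha>3 \<rho>1 \<rho>2 D p \<phi> T \<sigma> r d x u te a xh"
begin

abbreviation "Tmax' \<equiv> (SUP k. te k)"
abbreviation "tk' k \<equiv> real_of_ereal (te k)"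

lemma F_bound: assumes "0 \<le> t'" "ereal t' < Tmax'" shows "\<exists>M. \<forall>s\<in>{0..t'}. norm (f (x s) (u s) (d s)) \<le> M"
proof -
  have "bounded (x ` {0..t'})" by (intro compact_imp_bounded compact_continuous_image x_cont[OF cls assms] compact_Icc)
  then obtain Xb where "\<forall>y\<in>x ` {0..t'}. norm y \<le> Xb" by (auto simp: bounded_iff)
  then have Xb: "\<And>s. s \<in> {0..t'} \<Longrightarrow> norm (x s) \<le> Xb" by blast
  obtain Ub where Ub: "\<And>s. s \<in> {0..t'} \<Longrightarrow> norm (u s) \<le> Ub" using u_bound[OF cls assms] by blast
  obtain M where M: "\<And>z v w. norm z \<le> Xb \<and> norm v \<le> Ub \<and> norm w \<le> D \<Longrightarrow> norm (f z v w) \<le> M"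
    using f_bounded[of Xb Ub D] by blast
  show ?thesis using M Xb Ub dD[OF cls] by (meson atLeastAtMost_iff)
qed

lemma chain_x:
  assumes "0 \<le> a0" "a0 \<le> b0" "ereal b0 < Tmax'"
  shows "(\<lambda>s. gradV (x s) \<bullet> f (x s) (u s) (d s)) absolutely_integrable_on {a0..b0}"
    and "V (x b0) - V (x a0) = integral {a0..b0} (\<lambda>s. gradV (x s) \<bullet> f (x s) (u s) (d s))"
proof -
  have b0: "0 \<le> b0" using assms by simp
  have Fa: "(\<lambda>s. f (x s) (u s) (d s)) absolutely_integrable_on {0..b0}" using x_int[OF cls b0 assms(3)] by blast
  then have Fi: "(\<lambda>s. f (x s) (u s) (d s)) integrable_on {0..b0}" using absolutely_integrable_on_def by blast
  obtain M where M: "\<And>s. s \<in> {0..b0} \<Longrightarrow> norm (f (x s) (u s) (d s)) \<le> M" using F_bound[OF b0 assms(3)] by blast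
  have lt: "ereal t < Tmax'" if "t \<le> b0" for t using that assms(3) by (meson ereal_less_eq(3) le_less_trans)
  have Xeq: "x t = x a0 + integral {a0..t} (\<lambda>s. f (x s) (u s) (d s))" if "t \<in> {a0..b0}" for t
  proof -
    have t: "0 \<le> t" "t \<le> b0" "0 \<le> a0" "a0 \<le> b0" using that assms by auto
    have "x t = x 0 + integral {0..t} (\<lambda>s. f (x s) (u s) (d s))" using x_int[OF cls t(1) lt[OF t(2)]] by blast
    moreover have "x a0 = x 0 + integral {0..a0} (\<lambda>s. f (x s) (u s) (d s))" using x_int[OF cls t(3) lt[OF t(4)]] by blast
    moreover have "integral {0..t} (\<lambda>s. f (x s) (u s) (d s)) - integral {0..a0} (\<lambda>s. f (x s) (u s) (d s))
       = integral {a0..t} (\<lambda>s. f (x s) (u s) (d s))"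
      using that assms by (intro integral_diff_interval[OF Fi]) auto
    ultimately show ?thesis by (simp add: algebra_simps)
  qed
  have Ga: "(\<lambda>s. f (x s) (u s) (d s)) absolutely_integrable_on {a0..b0}"
    using assms by (intro absolutely_integrable_on_subinterval[OF Fa]) auto
  have GM: "\<And>t. t \<in> {a0..b0} \<Longrightarrow> norm (f (x t) (u t) (d t)) \<le> M" using M assms by auto
  note cr = chain_rule_int[of a0 b0 x "\<lambda>s. f (x s) (u s) (d s)" M V gradV, OF assms(2) Xeq Ga GM A1_V A1_C1]
  show "(\<lambda>s. gradV (x s) \<bullet> f (x s) (u s) (d s)) absolutely_integrable_on {a0..b0}" using cr(1) .
  show "V (x b0) - V (x a0) = integral {a0..b0} (\<lambda>s. gradV (x s) \<bullet> f (x s) (u s) (d s))" using cr(2) .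
qed


abbreviation "Uk' k t \<equiv> ((\<chi> i. gfun p \<phi> (a k i) (t - tk' k)) :: real^'m)"

lemma kappa_nonneg: "0 \<le> \<kappa>"
  unfolding \<kappa>_def by (intro K_nonneg[OF A1_K(3)] Kinv_right(2)[OF A1_K(2) eps_nonneg])

lemma L_decay:
  assumes "0 \<le> a0" "a0 \<le> b0" "ereal b0 < Tmax'" "\<forall>s\<in>{a0<..b0}. V (x s) \<ge> eps"
  shows "V (x b0) \<le> V (x a0) - (1 - \<sigma>) * \<kappa> * (b0 - a0)"
proof -
  note ch = chain_x[OF assms(1-3)]
  define w where "w = (\<lambda>s. gradV (x s) \<bullet> f (x s) (u s) (d s))"
  have wi: "w integrable_on {a0..b0}" using ch(1) unfolding w_def absolutely_integrable_on_def by blast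
  define E where "E = insert a0 (range tk')"
  have negE: "negligible E"
  proof -
    have "countable E" unfolding E_def by simp
    then have "negligible (\<Union>((\<lambda>y. {y}) ` E))" by (intro negligible_countable_Union) auto
    then show ?thesis by simp
  qed
  have wle: "w s \<le> - (1 - \<sigma>) * \<kappa>" if "s \<in> {a0..b0} - E" for s
  proof -
    have s: "a0 < s" "s \<le> b0" "\<And>k. s \<noteq> tk' k" using that by (auto simp: E_def)
    have s0: "0 \<le> s" using s assms by simp
    have sT: "ereal s < Tmax'" using s(2) assms(3) by (meson ereal_less_eq(3) le_less_trans)
    obtain k where k: "te k \<le> ereal s" "ereal s < te (Suc k)" using piece_exists_T[OF cls s0 sT] by blast
    have fin: "te k < \<infinity>" using k(1) by (cases "te k") auto
    have "tk' k \<le> s" using k(1) te_fin[OF cls fin] by (metis ereal_less_eq(3))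
    then have lt: "tk' k < s" using s(3)[of k] by linarith
    have Vs: "V (x s) \<ge> eps" using assms(4) s by auto
    have nt: "\<not> (\<rho>1 (norm (Uk' k s - \<gamma> (x s))) \<ge> \<sigma> / 2 * \<alpha>3 (norm (x s)) \<and> V (x s) \<ge> eps)"
      using kfacts(4)[OF cls fin] lt k(2) by blast
    have ue: "u s = Uk' k s" using u_piece[OF cls k] .
    have "\<rho>1 (norm (u s - \<gamma> (x s))) < \<sigma> / 2 * \<alpha>3 (norm (x s))" using nt Vs ue by auto
    then have "gradV (x s) \<bullet> f (x s) (\<gamma> (x s) + (u s - \<gamma> (x s))) (d s) \<le> - (1 - \<sigma>) * \<kappa>"
      using ISS_decay[OF Vs] dD[OF cls s0] by blast
    then show ?thesis by (simp add: w_def)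
  qed
  have "integral {a0..b0} w = integral {a0..b0} (\<lambda>s. if s \<in> E then - (1 - \<sigma>) * \<kappa> else w s)"
    by (rule integral_spike[OF negE]) auto
  also have "\<dots> \<le> integral {a0..b0} (\<lambda>s. - (1 - \<sigma>) * \<kappa>)"
  proof (rule integral_le)
    show "(\<lambda>s. if s \<in> E then - (1 - \<sigma>) * \<kappa> else w s) integrable_on {a0..b0}"
      by (rule integrable_spike[OF wi negE]) auto
  qed (use wle in auto)
  also have "\<dots> = (b0 - a0) * (- (1 - \<sigma>) * \<kappa>)" using assms(2) by simp
  finally have "integral {a0..b0} w \<le> (b0 - a0) * (- (1 - \<sigma>) * \<kappa>)" .
  moreover have "V (x b0) - V (x a0) = integral {a0..b0} w" using ch(2) unfolding w_def .
  ultimately show ?thesis by (simp add: algebra_simps)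
qed

lemma Ldown:
  assumes "eps \<le> c" "0 \<le> t0" "t0 \<le> t" "ereal t < Tmax'" "V (x t0) \<le> c"
  shows "V (x t) \<le> c"
proof (rule ccontr)
  assume nt: "\<not> V (x t) \<le> c"
  have xc: "continuous_on {t0..t} x"
    using assms by (intro continuous_on_subset[OF x_cont[OF cls _ assms(4)]]) auto
  have vc: "continuous_on {t0..t} (\<lambda>s. V (x s))"
    using continuous_on_compose2[OF V_cont[of UNIV] xc] by simp
  define S where "S = {t0..t} \<inter> (\<lambda>s. V (x s)) -` {..c}"
  have cS: "closed S" unfolding S_def by (intro continuous_closed_preimage vc) auto
  have t0S: "t0 \<in> S" using assms by (simp add: S_def)
  have bS: "bdd_above S" unfolding S_def by (rule bdd_above_Int1) simp
  define s0 where "s0 = Sup S"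
  have s0S: "s0 \<in> S" unfolding s0_def using closed_contains_Sup[OF _ bS cS] t0S by blast
  then have s0: "t0 \<le> s0" "s0 \<le> t" "V (x s0) \<le> c" by (auto simp: S_def)
  have up: "s \<le> s0" if "s \<in> S" for s unfolding s0_def by (rule cSup_upper[OF that bS])
  have Ve: "\<forall>s\<in>{s0<..t}. V (x s) \<ge> eps"
  proof
    fix s assume s: "s \<in> {s0<..t}"
    show "V (x s) \<ge> eps"
    proof (rule ccontr)
      assume "\<not> V (x s) \<ge> eps"
      then have "s \<in> S" using s s0 assms(1) by (auto simp: S_def)
      then show False using up s by force
    qed
  qed
  have "V (x t) \<le> V (x s0) - (1 - \<sigma>) * \<kappa> * (t - s0)"
    using L_decay[OF _ s0(2) assms(4) Ve] s0 assms(2) by simp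
  also have "\<dots> \<le> V (x s0)" using s0 \<sigma> kappa_nonneg by (simp add: mult_nonneg_nonneg)
  finally show False using s0(3) nt by simp
qed

lemma V_bound: "0 \<le> t \<Longrightarrow> ereal t < Tmax' \<Longrightarrow> V (x t) \<le> max eps (V (x 0))"
  by (rule Ldown) auto

lemma x_bound: "0 \<le> t \<Longrightarrow> ereal t < Tmax' \<Longrightarrow> norm (x t) \<le> Kinv \<alpha>1 (max eps (V (x 0)))"
proof -
  assume "0 \<le> t" "ereal t < Tmax'"
  then have "\<alpha>1 (norm (x t)) \<le> max eps (V (x 0))" using V_bound A1_sandwich[of "x t"] by (meson order_trans)
  then show ?thesis using K_le_Kinv[OF A1_K(1) norm_ge_zero[of "x t"]] eps_nonneg by simp
qed

lemma xh_decr: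
  assumes fin: "te k < \<infinity>" and t: "\<tau> \<in> {0..T}"
  shows "V (xh k \<tau>) \<le> V (xh k 0)"
proof -
  note der = kfacts(2)[OF cls fin]
  have d2: "((\<lambda>s. V (xh k s)) has_derivative (\<lambda>h. gradV (xh k s) \<bullet> (h *\<^sub>R f (xh k s) (\<gamma> (xh k s)) 0))) (at s within {0..\<tau>})"
    if "0 \<le> s" "s \<le> \<tau>" for s
  proof -
    have "(xh k has_vector_derivative f (xh k s) (\<gamma> (xh k s)) 0) (at s within {0..T})" using der that t by auto
    then have "(xh k has_vector_derivative f (xh k s) (\<gamma> (xh k s)) 0) (at s within {0..\<tau>})"
      by (rule has_vector_derivative_within_subset) (use t in auto)
    then have "(xh k has_derivative (\<lambda>h. h *\<^sub>R f (xh k s) (\<gamma> (xh k s)) 0)) (at s within {0..\<tau>})"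
      by (simp add: has_vector_derivative_def)
    from has_derivative_compose[OF this A1_V] show ?thesis by simp
  qed
  have "\<exists>\<xi>\<in>{0..\<tau>}. V (xh k \<tau>) - V (xh k 0) = gradV (xh k \<xi>) \<bullet> ((\<tau> - 0) *\<^sub>R f (xh k \<xi>) (\<gamma> (xh k \<xi>)) 0)"
    by (rule mvt_very_simple[of 0 \<tau> "\<lambda>s. V (xh k s)" "\<lambda>s h. gradV (xh k s) \<bullet> (h *\<^sub>R f (xh k s) (\<gamma> (xh k s)) 0)"])
       (use t d2 in auto)
  then obtain \<xi> where "\<xi> \<in> {0..\<tau>}" and eq: "V (xh k \<tau>) - V (xh k 0) = gradV (xh k \<xi>) \<bullet> ((\<tau> - 0) *\<^sub>R f (xh k \<xi>) (\<gamma> (xh k \<xi>)) 0)"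
    by blast
  have "gradV (xh k \<xi>) \<bullet> f (xh k \<xi>) (\<gamma> (xh k \<xi>) + 0) 0 \<le> - \<alpha>3 (norm (xh k \<xi>)) + \<rho>1 (norm (0::real^'m)) + \<rho>2 (norm (0::real^'q))"
    by (rule A1_ISS)
  then have "gradV (xh k \<xi>) \<bullet> f (xh k \<xi>) (\<gamma> (xh k \<xi>)) 0 \<le> 0"
    using K_0[OF A1_K(4)] K_0[OF A1_K(5)] K_nonneg[OF A1_K(3) norm_ge_zero[of "xh k \<xi>"]] by simp
  then have "\<tau> * (gradV (xh k \<xi>) \<bullet> f (xh k \<xi>) (\<gamma> (xh k \<xi>)) 0) \<le> 0"
    using t by (intro mult_nonneg_nonpos) auto
  then show ?thesis using eq by simp
qed

lemma xh_bound:
  assumes fin: "te k < \<infinity>" and t: "\<tau> \<in> {0..T}"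
  shows "norm (xh k \<tau>) \<le> Kinv \<alpha>1 (max eps (V (x 0)))"
proof -
  have "ereal (tk' k) < Tmax'" using te_lt_Tmax[OF cls fin] te_fin[OF cls fin] by simp
  then have "V (x (tk' k)) \<le> max eps (V (x 0))" using V_bound tk_nonneg[OF cls] by blast
  then have "\<alpha>1 (norm (xh k \<tau>)) \<le> max eps (V (x 0))"
    using xh_decr[OF fin t] kfacts(1)[OF cls fin] A1_sandwich[of "xh k \<tau>"] by simp
  then show ?thesis using K_le_Kinv[OF A1_K(1) norm_ge_zero[of "xh k \<tau>"]] eps_nonneg by simp
qed

lemma xh_cont:
  assumes fin: "te k < \<infinity>"
  shows "continuous_on {0..T} (xh k)"
  using kfacts(2)[OF cls fin]
  unfolding continuous_on_eq_continuous_within has_vector_derivative_def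
  by (meson has_derivative_continuous)


lemma gap:
  assumes rb: "r < r_bound \<alpha>1 \<alpha>2 \<alpha>3 eps (V (x 0))" and fin: "te k < \<infinity>"
  shows "te k + ereal (tau (x 0)) \<le> te (Suc k)"
proof (cases "te (Suc k) = \<infinity>")
  case True then show ?thesis by simp
next
  case False
  then have fin1: "te (Suc k) < \<infinity>" by (simp add: less_top)
  define t0 where "t0 = tk' k"
  define t1 where "t1 = tk' (Suc k)"
  define x0 where "x0 = x 0"
  have e0: "te k = ereal t0" unfolding t0_def by (rule te_fin[OF cls fin])
  have e1: "te (Suc k) = ereal t1" unfolding t1_def by (rule te_fin[OF cls fin1])
  have t01: "t0 < t1" using te_inc[OF cls fin] e0 e1 by simp
  have t0nn: "0 \<le> t0" using tk_nonneg[OF cls] by (simp add: t0_def)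
  have t1T: "ereal t1 < Tmax'" using te_lt_Tmax[OF cls fin1] e1 by simp
  have tau0: "0 < tau x0" using rb_facts(3)[OF rb] by (simp add: x0_def)
  show ?thesis
  proof (rule ccontr)
    assume "\<not> ?thesis"
    then have hlt: "t1 - t0 < tau x0" using e0 e1 by (simp add: x0_def)
    define h where "h = t1 - t0"
    have h0: "0 < h" using t01 by (simp add: h_def)
    have hT: "h \<le> T" using hlt by (simp add: h_def tau_def)
    define R where "R = Rr x0"
    have R0: "0 \<le> R" unfolding R_def by (rule Rr_nonneg)
    have xhR: "norm (xh k \<tau>) \<le> R" if "\<tau> \<in> {0..T}" for \<tau>
      using xh_bound[OF fin that] by (simp add: R_def Rr_def ebar_def x0_def)
    have gc: "continuous_on (cball 0 R) \<gamma>" by (rule lipschitz_on_continuous_on[OF Lg])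
    have coef: "\<bar>a k i j\<bar> \<le> Ac x0" if "j \<le> p" for i j
    proof -
      have "continuous_on {0..T} (\<lambda>\<tau>. \<gamma> (xh k \<tau>))"
        using xhR by (intro continuous_on_compose2[OF gc xh_cont[OF fin]]) auto
      then have uhc: "continuous_on {0..T} (\<lambda>\<tau>. \<gamma> (xh k \<tau>) $ i)" by (rule continuous_on_component)
      have uhb: "\<bar>\<gamma> (xh k \<tau>) $ i\<bar> \<le> Bu x0" if "\<tau> \<in> {0..T}" for \<tau>
        using component_le_norm_cart[of "\<gamma> (xh k \<tau>)" i] gamma_norm[OF xhR[OF that]]
        by (simp add: Bu_def R_def)
      have opt: "\<forall>c'. \<bar>gfun p \<phi> c' 0 - \<gamma> (xh k 0) $ i\<bar> \<le> eta (norm (xh k 0)) \<longrightarrow>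
              integral {0..T} (\<lambda>\<tau>. (gfun p \<phi> (a k i) \<tau> - \<gamma> (xh k \<tau>) $ i)\<^sup>2)
              \<le> integral {0..T} (\<lambda>\<tau>. (gfun p \<phi> c' \<tau> - \<gamma> (xh k \<tau>) $ i)\<^sup>2)"
        using kfacts(3)[OF cls fin] by blast
      have "(\<Sum>j\<le>p. (a k i j)^2) \<le> 10 * T * (Bu x0)^2 / mG"
        by (rule coef_bound[OF uhc uhb norm_ge_zero opt])
      then show ?thesis unfolding Ac_def by (rule coef_bound_abs[OF _ that])
    qed
    have sa: "(\<Sum>j\<le>p. \<bar>a k i j\<bar>) \<le> real (Suc p) * Ac x0" for i
      using sum_bounded_above[of "{..p}" "\<lambda>j. \<bar>a k i j\<bar>" "Ac x0"] coef by simp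
    have Ub: "norm (Uk' k s) \<le> Ub x0" if "s \<in> {t0..t0 + T}" for s
    proof -
      have "norm (Uk' k s) \<le> real CARD('m) * (real (Suc p) * Ac x0 * Pphi)"
      proof (rule vec_norm_bound)
        fix i
        have "\<bar>gfun p \<phi> (a k i) (s - t0)\<bar> \<le> (\<Sum>j\<le>p. \<bar>a k i j\<bar>) * (\<Sum>j\<le>p. \<bar>\<phi> j (s - t0)\<bar>)"
          by (rule gfun_bound)
        also have "\<dots> \<le> (real (Suc p) * Ac x0) * Pphi"
          using that Ac_nonneg[of x0] by (intro mult_mono sa Pphi) (auto intro: sum_nonneg)
        finally show "\<bar>Uk' k s $ i\<bar> \<le> real (Suc p) * Ac x0 * Pphi" by (simp add: t0_def)
      qed
      then show ?thesis by (simp add: Ub_def)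
    qed
    have xR: "norm (x s) \<le> R" if "0 \<le> s" "s \<le> t1" for s
    proof -
      have "ereal s < Tmax'" using that t1T by (meson ereal_less_eq(3) le_less_trans)
      then show ?thesis using x_bound[OF that(1)] by (simp add: R_def Rr_def ebar_def x0_def)
    qed
    have Fb: "norm (f (x s) (Uk' k s) (d s)) \<le> Mf x0" if "s \<in> {t0..t1}" for s
      using that t0nn hT h_def by (intro Mf xR[unfolded R_def] Ub dD[OF cls]) auto
    have xdiff: "norm (x t1 - x t0) \<le> Mf x0 * h"
    proof -
      have t1nn: "0 \<le> t1" using t0nn t01 by simp
      have Fi: "(\<lambda>s. f (x s) (u s) (d s)) integrable_on {0..t1}"
        using x_int[OF cls t1nn t1T] absolutely_integrable_on_def by blast
      have t0T: "ereal t0 < Tmax'" using t01 t1T by (meson ereal_less_eq(3) le_less_trans less_imp_le)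
      have "x t1 - x t0 = integral {0..t1} (\<lambda>s. f (x s) (u s) (d s)) - integral {0..t0} (\<lambda>s. f (x s) (u s) (d s))"
        using x_int[OF cls t1nn t1T] x_int[OF cls t0nn t0T] by simp
      also have "\<dots> = integral {t0..t1} (\<lambda>s. f (x s) (u s) (d s))"
        using t0nn t01 by (intro integral_diff_interval[OF Fi]) auto
      also have "\<dots> = integral {t0..t1} (\<lambda>s. f (x s) (Uk' k s) (d s))"
      proof (rule integral_spike[OF negligible_sing[of t1]])
        fix s assume "s \<in> {t0..t1} - {t1}"
        then have "te k \<le> ereal s" "ereal s < te (Suc k)" using e0 e1 by auto
        then show "f (x s) (Uk' k s) (d s) = f (x s) (u s) (d s)" using u_piece[OF cls] by simp
      qed
      finally have eq: "x t1 - x t0 = integral {t0..t1} (\<lambda>s. f (x s) (Uk' k s) (d s))" .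
      have Fi01: "(\<lambda>s. f (x s) (u s) (d s)) integrable_on {t0..t1}"
        using t0nn t01 by (intro integrable_subinterval_real[OF Fi]) auto
      have Fi': "(\<lambda>s. f (x s) (Uk' k s) (d s)) integrable_on {t0..t1}"
      proof (rule integrable_spike[OF Fi01 negligible_sing[of t1]])
        fix s assume "s \<in> {t0..t1} - {t1}"
        then have "te k \<le> ereal s" "ereal s < te (Suc k)" using e0 e1 by auto
        then show "f (x s) (Uk' k s) (d s) = f (x s) (u s) (d s)" using u_piece[OF cls] by simp
      qed
      have "norm (integral {t0..t1} (\<lambda>s. f (x s) (Uk' k s) (d s))) \<le> Mf x0 * (t1 - t0)"
        by (rule integral_bound_const[OF Fi' _ Fb]) (use t01 in auto)
      then show ?thesis using eq by (simp add: h_def)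
    qed
    have eb0: "norm (Uk' k t0 - \<gamma> (x t0)) \<le> E0 x0"
    proof -
      have xh0: "xh k 0 = x t0" using kfacts(1)[OF cls fin] by (simp add: t0_def)
      have comp: "\<bar>(Uk' k t0 - \<gamma> (x t0)) $ i\<bar> \<le> eta (norm (x t0))" for i
        using kfacts(3)[OF cls fin] xh0 by (simp add: t0_def)
      have "norm (Uk' k t0 - \<gamma> (x t0)) \<le> sqrt (real CARD('m)) * eta (norm (x t0))"
        by (rule vec_norm_bound_sqrt[OF comp])
      also have "\<dots> = Kinv \<rho>1 (r * (\<sigma> / 2) * \<alpha>3 (norm (x t0)))"
        unfolding eta_def by simp
      also have "\<dots> \<le> E0 x0"
      proof -
        have a3: "\<alpha>3 (norm (x t0)) \<le> \<alpha>3 R"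
          using K_mono(1)[OF A1_K(3) norm_ge_zero[of "x t0"] R0] xR[OF t0nn] t01 by simp
        have n1: "0 \<le> r * (\<sigma> / 2) * \<alpha>3 (norm (x t0))" using r \<sigma> K_nonneg[OF A1_K(3) norm_ge_zero[of "x t0"]] by simp
        have n2: "0 \<le> r * (\<sigma> / 2) * \<alpha>3 R" using r \<sigma> K_nonneg[OF A1_K(3) R0] by simp
        have "r * (\<sigma> / 2) * \<alpha>3 (norm (x t0)) \<le> r * (\<sigma> / 2) * \<alpha>3 R"
          using a3 r \<sigma> by (intro mult_left_mono) auto
        then show ?thesis unfolding E0_def R_def[symmetric] using Kinv_mono(1)[OF A1_K(4) n1 n2] by simp
      qed
      finally show ?thesis .
    qed
    have eb1: "E1 \<le> norm (Uk' k t1 - \<gamma> (x t1))"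
    proof -
      have tr: "\<rho>1 (norm (Uk' k t1 - \<gamma> (x t1))) \<ge> \<sigma> / 2 * \<alpha>3 (norm (x t1)) \<and> V (x t1) \<ge> eps"
        using kfacts(5)[OF cls fin] fin1 by (simp add: t1_def)
      have "Kinv \<alpha>2 eps \<le> norm (x t1)" using V_ge_eps(3) tr by blast
      then have "\<alpha>3 (Kinv \<alpha>2 eps) \<le> \<alpha>3 (norm (x t1))"
        using K_mono(1)[OF A1_K(3) Kinv_right(2)[OF A1_K(2) eps_nonneg] norm_ge_zero[of "x t1"]] by blast
      then have "\<sigma> / 2 * \<alpha>3 (Kinv \<alpha>2 eps) \<le> \<rho>1 (norm (Uk' k t1 - \<gamma> (x t1)))"
        using tr \<sigma> by (smt (verit) mult_left_mono half_gt_zero)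
      moreover have "0 \<le> \<sigma> / 2 * \<alpha>3 (Kinv \<alpha>2 eps)"
        using \<sigma> K_nonneg[OF A1_K(3) Kinv_right(2)[OF A1_K(2) eps_nonneg]] by simp
      ultimately show ?thesis unfolding E1_def using K_ge_Kinv[OF A1_K(4) norm_ge_zero[of "Uk' k t1 - \<gamma> (x t1)"]] by blast
    qed
    have Udiff: "norm (Uk' k t1 - Uk' k t0) \<le> real CARD('m) * (real (Suc p) * Ac x0 * (Lam * h))"
    proof (rule vec_norm_bound)
      fix i
      have "gfun p \<phi> (a k i) h - gfun p \<phi> (a k i) 0 = gfun p (\<lambda>j \<tau>. \<phi> j \<tau> - \<phi> j 0) (a k i) h"
        unfolding gfun_def by (simp add: sum_subtractf right_diff_distrib)
      then have "\<bar>gfun p \<phi> (a k i) h - gfun p \<phi> (a k i) 0\<bar> \<le> (\<Sum>j\<le>p. \<bar>a k i j\<bar>) * (\<Sum>j\<le>p. \<bar>\<phi> j h - \<phi> j 0\<bar>)"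
        using gfun_bound[of p "\<lambda>j \<tau>. \<phi> j \<tau> - \<phi> j 0" "a k i" h] by simp
      also have "\<dots> \<le> (real (Suc p) * Ac x0) * (Lam * h)"
        using h0 hT Ac_nonneg[of x0] by (intro mult_mono sa Lam) (auto intro: sum_nonneg)
      finally show "\<bar>(Uk' k t1 - Uk' k t0) $ i\<bar> \<le> real (Suc p) * Ac x0 * (Lam * h)"
        by (simp add: t0_def h_def)
    qed
    have gdiff: "norm (\<gamma> (x t1) - \<gamma> (x t0)) \<le> Lg R * (Mf x0 * h)"
    proof -
      have "dist (\<gamma> (x t1)) (\<gamma> (x t0)) \<le> Lg R * dist (x t1) (x t0)"
        using xR[of t1] xR[OF t0nn] t0nn t01 by (intro lipschitz_onD[OF Lg]) auto
      also have "\<dots> \<le> Lg R * (Mf x0 * h)" using xdiff by (simp add: dist_norm mult_left_mono Lg_nonneg)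
      finally show ?thesis by (simp add: dist_norm)
    qed
    have "E1 - E0 x0 \<le> norm (Uk' k t1 - \<gamma> (x t1)) - norm (Uk' k t0 - \<gamma> (x t0))" using eb0 eb1 by simp
    also have "\<dots> \<le> norm ((Uk' k t1 - \<gamma> (x t1)) - (Uk' k t0 - \<gamma> (x t0)))" by (rule norm_triangle_ineq2)
    also have "(Uk' k t1 - \<gamma> (x t1)) - (Uk' k t0 - \<gamma> (x t0)) = (Uk' k t1 - Uk' k t0) - (\<gamma> (x t1) - \<gamma> (x t0))"
      by simp
    also have "norm \<dots> \<le> norm (Uk' k t1 - Uk' k t0) + norm (\<gamma> (x t1) - \<gamma> (x t0))" by (rule norm_triangle_ineq4)
    also have "\<dots> \<le> Cc x0 * h" using Udiff gdiff by (simp add: Cc_def R_def algebra_simps)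
    also have "\<dots> \<le> Cc x0 * tau x0" using hlt Cc_nonneg[of x0] by (simp add: h_def mult_left_mono)
    also have "\<dots> < (Cc x0 + 1) * tau x0" using tau0 by (simp add: algebra_simps)
    also have "\<dots> \<le> E1 - E0 x0"
    proof -
      have "tau x0 \<le> (E1 - E0 x0) / (Cc x0 + 1)" by (simp add: tau_def)
      then show ?thesis using Cc_nonneg[of x0] by (simp add: field_simps)
    qed
    finally show False by simp
  qed
qed


lemma te_lower:
  assumes rb: "r < r_bound \<alpha>1 \<alpha>2 \<alpha>3 eps (V (x 0))"
  shows "ereal (real k * tau (x 0)) \<le> te k"
proof (induction k)
  case 0 then show ?case by (simp add: te0[OF cls])
next
  case (Suc k)
  show ?case
  proof (cases "te k = \<infinity>")
    case True then show ?thesis using te_inf[OF cls] by simp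
  next
    case False
    then have fin: "te k < \<infinity>" by (simp add: less_top)
    have "ereal (real (Suc k) * tau (x 0)) = ereal (real k * tau (x 0)) + ereal (tau (x 0))"
      by (simp add: algebra_simps)
    also have "\<dots> \<le> te k + ereal (tau (x 0))" using Suc by (intro add_right_mono)
    also have "\<dots> \<le> te (Suc k)" by (rule gap[OF rb fin])
    finally show ?thesis .
  qed
qed

lemma all_lt_Tmax:
  assumes rb: "r < r_bound \<alpha>1 \<alpha>2 \<alpha>3 eps (V (x 0))"
  shows "ereal t < Tmax'"
proof -
  have "0 < tau (x 0)" by (rule rb_facts(3)[OF rb])
  then obtain k where k: "t < real k * tau (x 0)" using ex_less_of_nat_mult by blast
  then have "ereal t < ereal (real k * tau (x 0))" by simp
  then have "ereal t < te k" using te_lower[OF rb, of k] by (rule less_le_trans)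
  then show ?thesis by (auto simp: less_SUP_iff)
qed

lemma ultimate:
  assumes rb: "r < r_bound \<alpha>1 \<alpha>2 \<alpha>3 eps (V (x 0))" and b: "norm (x 0) \<le> b" and t: "Tb b \<le> t"
  shows "norm (x t) \<le> Kinv \<alpha>1 eps"
proof -
  have ep: "0 < eps" by (rule rb_facts(1)[OF rb])
  have "0 < Kinv \<alpha>2 eps" using Kinv_mono(2)[OF A1_K(2), of 0 eps] Kinv_0[OF A1_K(2)] ep by simp
  then have kp: "0 < \<kappa>" unfolding \<kappa>_def by (rule K_pos[OF A1_K(3)])
  have t0: "0 \<le> t" using t by (simp add: Tb_def)
  have Vt: "V (x t) \<le> eps"
  proof (cases "\<exists>s\<in>{0..t}. V (x s) \<le> eps")
    case True
    then obtain s where "s \<in> {0..t}" "V (x s) \<le> eps" by blast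
    then show ?thesis using Ldown[of eps s t] all_lt_Tmax[OF rb] by auto
  next
    case False
    then have "\<forall>s\<in>{0<..t}. V (x s) \<ge> eps" by (auto simp: not_le intro: less_imp_le)
    then have "V (x t) \<le> V (x 0) - (1 - \<sigma>) * \<kappa> * (t - 0)"
      by (intro L_decay all_lt_Tmax[OF rb]) (use t0 in auto)
    moreover have "V (x 0) \<le> \<alpha>2 b"
      using A1_sandwich[of "x 0"] K_mono(1)[OF A1_K(2) norm_ge_zero[of "x 0"], of b] b
      by (meson norm_ge_zero order_trans)
    moreover have "\<alpha>2 b - eps \<le> (1 - \<sigma>) * \<kappa> * t"
    proof -
      have "(\<alpha>2 b - eps) / ((1 - \<sigma>) * \<kappa>) \<le> t" using t by (simp add: Tb_def)
      then show ?thesis using kp \<sigma> by (simp add: pos_divide_le_eq mult.commute)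
    qed
    ultimately show ?thesis by simp
  qed
  have "\<alpha>1 (norm (x t)) \<le> eps" using A1_sandwich[of "x t"] Vt by linarith
  then show ?thesis using K_le_Kinv[OF A1_K(1) norm_ge_zero[of "x t"]] eps_nonneg by simp
qed

end

end

theorem theorem1:
  fixes f :: "real^'n \<Rightarrow> real^'m \<Rightarrow> real^'q \<Rightarrow> real^'n"
    and \<gamma> :: "real^'n \<Rightarrow> real^'m"
    and V :: "real^'n \<Rightarrow> real"
    and gradV :: "real^'n \<Rightarrow> real^'n"
    and \<alpha>1 \<alpha>2 \<alpha>3 \<rho>1 \<rho>2 :: "real \<Rightarrow> real"
    and D T \<sigma> r :: real
    and p :: nat
    and \<phi> :: "nat \<Rightarrow> real \<Rightarrow> real"
  assumes A1_V: "\<And>z. (V has_derivative (\<lambda>h. gradV z \<bullet> h)) (at z)"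
    and A1_C1: "continuous_on UNIV gradV"
    and A1_K: "class_Kinf \<alpha>1" "class_Kinf \<alpha>2" "class_Kinf \<alpha>3" "class_Kinf \<rho>1" "class_Kinf \<rho>2"
    and A1_sandwich: "\<And>z. \<alpha>1 (norm z) \<le> V z \<and> V z \<le> \<alpha>2 (norm z)"
    and A1_ISS: "\<And>z e w. gradV z \<bullet> f z (\<gamma> z + e) w
                     \<le> - \<alpha>3 (norm z) + \<rho>1 (norm e) + \<rho>2 (norm w)"
    and A2_f: "\<And>C. compact C \<Longrightarrow> \<exists>L. L-lipschitz_on C (\<lambda>(z, v, w). f z v w)"
    and A2_\<gamma>: "\<And>C. compact C \<Longrightarrow> \<exists>L. L-lipschitz_on C \<gamma>"
    and A2_0: "f 0 0 0 = 0" "\<gamma> 0 = 0"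
    and A3: "D \<ge> 0"
    and A4_C1: "\<And>j. j \<le> p \<Longrightarrow> \<exists>\<phi>'. continuous_on {0..} \<phi>'
                    \<and> (\<forall>\<tau>\<ge>0. (\<phi> j has_real_derivative \<phi>' \<tau>) (at \<tau> within {0..}))"
    and A4_const: "\<exists>c. c \<noteq> 0 \<and> (\<forall>\<tau>\<ge>0. \<phi> 0 \<tau> = c)"
    and A4_T: "T > 0"
    and A4_indep: "\<And>c. (\<forall>\<tau>\<in>{0..T}. gfun p \<phi> c \<tau> = 0) \<Longrightarrow> \<forall>j\<le>p. c j = 0"
    and \<sigma>: "0 < \<sigma>" "\<sigma> < 1"
    and r: "0 \<le> r"
  shows
    "(\<forall>x0. \<exists>\<tau>>0. \<forall>d x u te a xh.
        closed_loop_solution f \<gamma> V \<alpha>2 \<alpha>3 \<rho>1 \<rho>2 D p \<phi> T \<sigma> r d x u te a xh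
        \<and> x 0 = x0
        \<and> r < r_bound \<alpha>1 \<alpha>2 \<alpha>3 (trig_eps \<alpha>2 \<alpha>3 \<rho>2 D \<sigma>) (V x0)
        \<longrightarrow> (\<forall>k\<ge>1. te k < \<infinity> \<longrightarrow> te k + ereal \<tau> \<le> te (Suc k)))
   \<and> (\<forall>b. \<exists>Tb\<ge>0. \<forall>d x u te a xh.
        closed_loop_solution f \<gamma> V \<alpha>2 \<alpha>3 \<rho>1 \<rho>2 D p \<phi> T \<sigma> r d x u te a xh
        \<and> norm (x 0) \<le> b
        \<and> r < r_bound \<alpha>1 \<alpha>2 \<alpha>3 (trig_eps \<alpha>2 \<alpha>3 \<rho>2 D \<sigma>) (V (x 0))
        \<longrightarrow> (\<forall>t\<ge>Tb. norm (x t) \<le> Kinv \<alpha>1 (trig_eps \<alpha>2 \<alpha>3 \<rho>2 D \<sigma>)))"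
proof -
  interpret S: sys f \<gamma> V gradV \<alpha>1 \<alpha>2 \<alpha>3 \<rho>1 \<rho>2 D T \<sigma> r p \<phi>
    by (rule sys.intro) (fact A1_V A1_C1 A1_K A1_sandwich A1_ISS A2_f A2_\<gamma> A2_0 A3 A4_C1 A4_const A4_T A4_indep \<sigma> r)+
  have E: "trig_eps \<alpha>2 \<alpha>3 \<rho>2 D \<sigma> = S.eps" by (simp add: S.eps_def)
  show ?thesis
  proof (intro conjI allI)
    fix x0 :: "real^'n"
    show "\<exists>\<tau>>0. \<forall>d x u te a xh.
        closed_loop_solution f \<gamma> V \<alpha>2 \<alpha>3 \<rho>1 \<rho>2 D p \<phi> T \<sigma> r d x u te a xh
        \<and> x 0 = x0
        \<and> r < r_bound \<alpha>1 \<alpha>2 \<alpha>3 (trig_eps \<alpha>2 \<alpha>3 \<rho>2 D \<sigma>) (V x0)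
        \<longrightarrow> (\<forall>k\<ge>1. te k < \<infinity> \<longrightarrow> te k + ereal \<tau> \<le> te (Suc k))"
    proof (cases "r < r_bound \<alpha>1 \<alpha>2 \<alpha>3 S.eps (V x0)")
      case True
      show ?thesis
      proof (intro exI[of _ "S.tau x0"] conjI allI impI)
        show "0 < S.tau x0" by (rule S.rb_facts(3)[OF True])
        fix d x u te a xh k
        assume H: "closed_loop_solution f \<gamma> V \<alpha>2 \<alpha>3 \<rho>1 \<rho>2 D p \<phi> T \<sigma> r d x u te a xh
          \<and> x 0 = x0 \<and> r < r_bound \<alpha>1 \<alpha>2 \<alpha>3 (trig_eps \<alpha>2 \<alpha>3 \<rho>2 D \<sigma>) (V x0)"
          and k: "1 \<le> k" "te k < \<infinity>"
        have rb: "r < r_bound \<alpha>1 \<alpha>2 \<alpha>3 S.eps (V (x 0))" using H E by simp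
        have "te k + ereal (S.tau (x 0)) \<le> te (Suc k)" by (rule S.gap[OF conjunct1[OF H] rb k(2)])
        then show "te k + ereal (S.tau x0) \<le> te (Suc k)" using H by simp
      qed
    next
      case False
      show ?thesis by (rule exI[of _ 1]) (use False E in auto)
    qed
  next
    fix b :: real
    show "\<exists>Tb\<ge>0. \<forall>d x u te a xh.
        closed_loop_solution f \<gamma> V \<alpha>2 \<alpha>3 \<rho>1 \<rho>2 D p \<phi> T \<sigma> r d x u te a xh
        \<and> norm (x 0) \<le> b
        \<and> r < r_bound \<alpha>1 \<alpha>2 \<alpha>3 (trig_eps \<alpha>2 \<alpha>3 \<rho>2 D \<sigma>) (V (x 0))
        \<longrightarrow> (\<forall>t\<ge>Tb. norm (x t) \<le> Kinv \<alpha>1 (trig_eps \<alpha>2 \<alpha>3 \<rho>2 D \<sigma>))"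
    proof (intro exI[of _ "S.Tb b"] conjI allI impI)
      show "0 \<le> S.Tb b" by (simp add: S.Tb_def)
      fix d x u te a xh t
      assume H: "closed_loop_solution f \<gamma> V \<alpha>2 \<alpha>3 \<rho>1 \<rho>2 D p \<phi> T \<sigma> r d x u te a xh
        \<and> norm (x 0) \<le> b \<and> r < r_bound \<alpha>1 \<alpha>2 \<alpha>3 (trig_eps \<alpha>2 \<alpha>3 \<rho>2 D \<sigma>) (V (x 0))"
        and t: "S.Tb b \<le> t"
      have rb: "r < r_bound \<alpha>1 \<alpha>2 \<alpha>3 S.eps (V (x 0))" using H E by simp
      have "norm (x t) \<le> Kinv \<alpha>1 S.eps"
        by (rule S.ultimate[OF conjunct1[OF H] rb _ t]) (use H in blast)
      then show "norm (x t) \<le> Kinv \<alpha>1 (trig_eps \<alpha>2 \<alpha>3 \<rho>2 D \<sigma>)" using E by simp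
    qed
  qed
qed

end
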